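(* Let $((f_t),(g_t),(h_t))$ be a $W_{1,+}$-geodesic on $G$ with associated function $m$, kernels $K,K^*$ and functions $P_t,Q_t$ as in the context. Then for all $x\in G$, $$\partial_tP_t(x)=(KP_t)(x),\qquad \partial_tQ_t(x)=-(K^*Q_t)(x).$$
   Context: $G$ is a connected, locally finite graph with graph distance $d$; geodesics are paths of adjacent vertices $\gamma(0),\dots,\gamma(n)$ with $n=d(\gamma(0),\gamma(n))$, $e_0(\gamma)=\gamma(0)$, $e_1(\gamma)=\gamma(n)$. For finitely supported probability distributions $f_0,f_1$: $\Pi_1(f_0,f_1)$ = couplings minimizing $\sum d(x,y)\pi(x,y)$ (minimum $W_1$), $\mathcal{C}(f_0,f_1)=\{(x,y):\pi(x,y)>0$ for some $\pi\in\Pi_1\}$; $W_1$-orientation: adjacent $x,y$ get $x\to y$ iff some geodesic $\gamma$ with $(e_0(\gamma),e_1(\gamma))\in\mathcal{C}(f_0,f_1)$ has $\gamma(k)=x,\gamma(k+1)=y$. Oriented paths: $\gamma(i)\to\gamma(i+1)$; $x\le y$ iff an oriented path (possibly of length $0$) goes from $x$ to $y$; $\gamma_i=\gamma(i)$. $E(G)=\{(xy):x\to y\}$, $T(G)$ triples $x_0\to x_1\to x_2$, $\mathcal{F}(x)=\{y:x\to y\}$, $\mathcal{E}(x)=\{y:y\to x\}$; $\nabla g(x_1)=\sum_{\mathcal{F}(x_1)}g(x_1x_2)-\sum_{\mathcal{E}(x_1)}g(x_0x_1)$, $\nabla h(x_1x_2)=\sum_{x_3\in\mathcal{F}(x_2)}h(x_1x_2x_3)-\sum_{x_0\in\mathcal{E}(x_1)}h(x_0x_1x_2)$.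 $W_{1,+}$-geodesic: a family $(f_t)_{t\in[0,1]}$ from $f_0$ to $f_1$ with $W_1(f_s,f_t)=|t-s|W_1(f_0,f_1)$, differentiable in $t$, with $g_t$ on $E(G)$, $h_t$ on $T(G)$, $\partial_tf_t=-\nabla g_t$, $\partial_tg_t=-\nabla h_t$, $g_t>0$, $f_t(x_1)h_t(x_0x_1x_2)=g_t(x_0x_1)g_t(x_1x_2)$. $C_\gamma(t)=f_t(\gamma_0)$ if $L(\gamma)=0$, $g_t(\gamma_0\gamma_1)$ if $L(\gamma)=1$, $\prod_{i=0}^{n-1}g_t(\gamma_i\gamma_{i+1})/\prod_{j=1}^{n-1}f_t(\gamma_j)$ if $n\ge2$. $\mathcal{A}=\{x:\mathcal{E}(x)=\emptyset\}$, $\mathcal{B}=\{x:\mathcal{F}(x)=\emptyset\}$; extremal oriented paths start in $\mathcal{A}$, end in $\mathcal{B}$; $\mathrm{SE}\Gamma_{1,x}$: oriented paths from a vertex of $\mathcal{A}$ to $x$; $\mathrm{SE}\Gamma_{2,x}$: oriented paths from $x$ to a vertex of $\mathcal{B}$. For $z_1\le\cdots\le z_p$, $m(z_1,\dots,z_p)=\sum_\gamma C_\gamma(0)$ over extremal oriented paths $\gamma$ with indices $k_1\le\dots\le k_p$, $\gamma(k_i)=z_i$ (for extremal $\gamma$, $C_\gamma(t)$ is independent of $t$). Kernels: $K(x_1,x_0)=m(x_0,x_1)/m(x_1)$ for $x_0\in\mathcal{E}(x_1)$, $K^*(x_0,x_1)=m(x_0,x_1)/m(x_0)$ for $x_1\in\mathcal{F}(x_0)$,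 zero otherwise; $Kf(x_1)=\sum_{x_0}K(x_1,x_0)f(x_0)$, $K^*f(x_0)=\sum_{x_1}K^*(x_0,x_1)f(x_1)$. $P_t(x)=\frac{1}{m(x)}\sum_{\gamma\in\mathrm{SE}\Gamma_{2,x}}C_\gamma(t)$, $Q_t(x)=\frac{1}{m(x)}\sum_{\gamma\in\mathrm{SE}\Gamma_{1,x}}C_\gamma(t)$. *)

theory Defs
  imports "HOL-Analysis.Analysis"
begin

definition walk :: "('v \<Rightarrow> 'v \<Rightarrow> bool) \<Rightarrow> 'v list \<Rightarrow> bool" where
  "walk adj p \<longleftrightarrow> p \<noteq> [] \<and> (\<forall>i. Suc i < length p \<longrightarrow> adj (p ! i) (p ! Suc i))"

definition graph_connected :: "('v \<Rightarrow> 'v \<Rightarrow> bool) \<Rightarrow> bool" where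
  "graph_connected adj \<longleftrightarrow> (\<forall>x y. \<exists>p. walk adj p \<and> hd p = x \<and> last p = y)"

definition locally_finite :: "('v \<Rightarrow> 'v \<Rightarrow> bool) \<Rightarrow> bool" where
  "locally_finite adj \<longleftrightarrow> (\<forall>x. finite {y. adj x y})"

definition gdist :: "('v \<Rightarrow> 'v \<Rightarrow> bool) \<Rightarrow> 'v \<Rightarrow> 'v \<Rightarrow> nat" where
  "gdist adj x y = (LEAST n. \<exists>p. walk adj p \<and> hd p = x \<and> last p = y \<and> length p = Suc n)"

definition geodesic :: "('v \<Rightarrow> 'v \<Rightarrow> bool) \<Rightarrow> 'v list \<Rightarrow> bool" where
  "geodesic adj p \<longleftrightarrow> walk adj p \<and> length p = Suc (gdist adj (hd p) (last p))"

definition prob_dist :: "('v \<Rightarrow> real) \<Rightarrow> bool" where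
  "prob_dist \<mu> \<longleftrightarrow> (\<forall>x. \<mu> x \<ge> 0) \<and> finite {x. \<mu> x \<noteq> 0} \<and> (\<Sum>x\<in>{x. \<mu> x \<noteq> 0}. \<mu> x) = 1"

definition coupling :: "('v \<Rightarrow> real) \<Rightarrow> ('v \<Rightarrow> real) \<Rightarrow> ('v \<Rightarrow> 'v \<Rightarrow> real) \<Rightarrow> bool" where
  "coupling \<mu> \<nu> \<pi> \<longleftrightarrow> (\<forall>x y. \<pi> x y \<ge> 0) \<and> finite {(x, y). \<pi> x y \<noteq> 0}
     \<and> (\<forall>x. (\<Sum>y\<in>{y. \<pi> x y \<noteq> 0}. \<pi> x y) = \<mu> x)
     \<and> (\<forall>y. (\<Sum>x\<in>{x. \<pi> x y \<noteq> 0}. \<pi> x y) = \<nu> y)"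

definition tcost :: "('v \<Rightarrow> 'v \<Rightarrow> bool) \<Rightarrow> ('v \<Rightarrow> 'v \<Rightarrow> real) \<Rightarrow> real" where
  "tcost adj \<pi> = (\<Sum>(x, y)\<in>{(x, y). \<pi> x y \<noteq> 0}. real (gdist adj x y) * \<pi> x y)"

definition W1 :: "('v \<Rightarrow> 'v \<Rightarrow> bool) \<Rightarrow> ('v \<Rightarrow> real) \<Rightarrow> ('v \<Rightarrow> real) \<Rightarrow> real" where
  "W1 adj \<mu> \<nu> = Inf (tcost adj ` {\<pi>. coupling \<mu> \<nu> \<pi>})"

definition opt_coupling :: "('v \<Rightarrow> 'v \<Rightarrow> bool) \<Rightarrow> ('v \<Rightarrow> real) \<Rightarrow> ('v \<Rightarrow> real) \<Rightarrow> ('v \<Rightarrow> 'v \<Rightarrow> real) \<Rightarrow> bool" where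
  "opt_coupling adj \<mu> \<nu> \<pi> \<longleftrightarrow> coupling \<mu> \<nu> \<pi> \<and> (\<forall>\<pi>'. coupling \<mu> \<nu> \<pi>' \<longrightarrow> tcost adj \<pi> \<le> tcost adj \<pi>')"

definition Csupp :: "('v \<Rightarrow> 'v \<Rightarrow> bool) \<Rightarrow> ('v \<Rightarrow> real) \<Rightarrow> ('v \<Rightarrow> real) \<Rightarrow> ('v \<times> 'v) set" where
  "Csupp adj \<mu> \<nu> = {(x, y). \<exists>\<pi>. opt_coupling adj \<mu> \<nu> \<pi> \<and> \<pi> x y > 0}"

definition w1_arrow :: "('v \<Rightarrow> 'v \<Rightarrow> bool) \<Rightarrow> ('v \<Rightarrow> real) \<Rightarrow> ('v \<Rightarrow> real) \<Rightarrow> 'v \<Rightarrow> 'v \<Rightarrow> bool" where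
  "w1_arrow adj \<mu> \<nu> x y \<longleftrightarrow> adj x y \<and>
     (\<exists>\<gamma>. geodesic adj \<gamma> \<and> (hd \<gamma>, last \<gamma>) \<in> Csupp adj \<mu> \<nu> \<and>
          (\<exists>k. Suc k < length \<gamma> \<and> \<gamma> ! k = x \<and> \<gamma> ! Suc k = y))"

definition oriented_path :: "('v \<Rightarrow> 'v \<Rightarrow> bool) \<Rightarrow> 'v list \<Rightarrow> bool" where
  "oriented_path ar p \<longleftrightarrow> p \<noteq> [] \<and> (\<forall>i. Suc i < length p \<longrightarrow> ar (p ! i) (p ! Suc i))"

definition sources :: "('v \<Rightarrow> 'v \<Rightarrow> bool) \<Rightarrow> 'v set" where
  "sources ar = {x. \<forall>y. \<not> ar y x}"

definition sinks :: "('v \<Rightarrow> 'v \<Rightarrow> bool) \<Rightarrow> 'v set" where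
  "sinks ar = {x. \<forall>y. \<not> ar x y}"

definition extremal_path :: "('v \<Rightarrow> 'v \<Rightarrow> bool) \<Rightarrow> 'v list \<Rightarrow> bool" where
  "extremal_path ar p \<longleftrightarrow> oriented_path ar p \<and> hd p \<in> sources ar \<and> last p \<in> sinks ar"

definition nabla_g :: "('v \<Rightarrow> 'v \<Rightarrow> bool) \<Rightarrow> ('v \<Rightarrow> 'v \<Rightarrow> real) \<Rightarrow> 'v \<Rightarrow> real" where
  "nabla_g ar g x1 = (\<Sum>x2\<in>{x2. ar x1 x2}. g x1 x2) - (\<Sum>x0\<in>{x0. ar x0 x1}. g x0 x1)"

definition nabla_h :: "('v \<Rightarrow> 'v \<Rightarrow> bool) \<Rightarrow> ('v \<Rightarrow> 'v \<Rightarrow> 'v \<Rightarrow> real) \<Rightarrow> 'v \<Rightarrow> 'v \<Rightarrow> real" where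
  "nabla_h ar h x1 x2 = (\<Sum>x3\<in>{x3. ar x2 x3}. h x1 x2 x3) - (\<Sum>x0\<in>{x0. ar x0 x1}. h x0 x1 x2)"

text \<open>C_\<gamma> evaluated with given f, g (i.e. at a given time)\<close>
definition Cpath :: "('v \<Rightarrow> real) \<Rightarrow> ('v \<Rightarrow> 'v \<Rightarrow> real) \<Rightarrow> 'v list \<Rightarrow> real" where
  "Cpath f g p =
     (if length p = 1 then f (hd p)
      else if length p = 2 then g (p ! 0) (p ! 1)
      else (\<Prod>i<length p - 1. g (p ! i) (p ! Suc i)) / (\<Prod>j\<in>{1..length p - 2}. f (p ! j)))"

definition visits_in_order :: "'v list \<Rightarrow> 'v list \<Rightarrow> bool" where
  "visits_in_order zs p \<longleftrightarrow> (\<exists>ks::nat list. length ks = length zs \<and> sorted ks \<and>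
      (\<forall>i<length zs. ks ! i < length p \<and> p ! (ks ! i) = zs ! i))"

definition mfun :: "('v \<Rightarrow> 'v \<Rightarrow> bool) \<Rightarrow> ('v \<Rightarrow> real) \<Rightarrow> ('v \<Rightarrow> 'v \<Rightarrow> real) \<Rightarrow> 'v list \<Rightarrow> real" where
  "mfun ar f0 g0 zs = (\<Sum>p\<in>{p. extremal_path ar p \<and> visits_in_order zs p}. Cpath f0 g0 p)"

definition Kop :: "('v \<Rightarrow> 'v \<Rightarrow> bool) \<Rightarrow> ('v \<Rightarrow> real) \<Rightarrow> ('v \<Rightarrow> 'v \<Rightarrow> real) \<Rightarrow> ('v \<Rightarrow> real) \<Rightarrow> 'v \<Rightarrow> real" where
  "Kop ar f0 g0 \<phi> x1 = (\<Sum>x0\<in>{x0. ar x0 x1}. (mfun ar f0 g0 [x0, x1] / mfun ar f0 g0 [x1]) * \<phi> x0)"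

definition Kstar :: "('v \<Rightarrow> 'v \<Rightarrow> bool) \<Rightarrow> ('v \<Rightarrow> real) \<Rightarrow> ('v \<Rightarrow> 'v \<Rightarrow> real) \<Rightarrow> ('v \<Rightarrow> real) \<Rightarrow> 'v \<Rightarrow> real" where
  "Kstar ar f0 g0 \<phi> x0 = (\<Sum>x1\<in>{x1. ar x0 x1}. (mfun ar f0 g0 [x0, x1] / mfun ar f0 g0 [x0]) * \<phi> x1)"

text \<open>P_t and Q_t (f, g are f_t, g_t; f0, g0 are f_0, g_0 for m)\<close>
definition Pfun :: "('v \<Rightarrow> 'v \<Rightarrow> bool) \<Rightarrow> ('v \<Rightarrow> real) \<Rightarrow> ('v \<Rightarrow> 'v \<Rightarrow> real) \<Rightarrow> ('v \<Rightarrow> real) \<Rightarrow> ('v \<Rightarrow> 'v \<Rightarrow> real) \<Rightarrow> 'v \<Rightarrow> real" where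
  "Pfun ar f0 g0 f g x = (1 / mfun ar f0 g0 [x]) *
     (\<Sum>p\<in>{p. oriented_path ar p \<and> hd p = x \<and> last p \<in> sinks ar}. Cpath f g p)"

definition Qfun :: "('v \<Rightarrow> 'v \<Rightarrow> bool) \<Rightarrow> ('v \<Rightarrow> real) \<Rightarrow> ('v \<Rightarrow> 'v \<Rightarrow> real) \<Rightarrow> ('v \<Rightarrow> real) \<Rightarrow> ('v \<Rightarrow> 'v \<Rightarrow> real) \<Rightarrow> 'v \<Rightarrow> real" where
  "Qfun ar f0 g0 f g x = (1 / mfun ar f0 g0 [x]) *
     (\<Sum>p\<in>{p. oriented_path ar p \<and> hd p \<in> sources ar \<and> last p = x}. Cpath f g p)"

definition W1plus_geodesic :: "('v \<Rightarrow> 'v \<Rightarrow> bool) \<Rightarrow> (real \<Rightarrow> 'v \<Rightarrow> real) \<Rightarrow>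
    (real \<Rightarrow> 'v \<Rightarrow> 'v \<Rightarrow> real) \<Rightarrow> (real \<Rightarrow> 'v \<Rightarrow> 'v \<Rightarrow> 'v \<Rightarrow> real) \<Rightarrow> bool" where
  "W1plus_geodesic adj f g h \<longleftrightarrow>
     (let ar = w1_arrow adj (f 0) (f 1) in
      (\<forall>t\<in>{0..1}. prob_dist (f t)) \<and>
      (\<forall>s\<in>{0..1}. \<forall>t\<in>{0..1}. W1 adj (f s) (f t) = \<bar>t - s\<bar> * W1 adj (f 0) (f 1)) \<and>
      (\<forall>x. \<forall>t\<in>{0..1}. ((\<lambda>s. f s x) has_real_derivative (- nabla_g ar (g t) x)) (at t within {0..1})) \<and>
      (\<forall>x y. ar x y \<longrightarrow> (\<forall>t\<in>{0..1}.
          ((\<lambda>s. g s x y) has_real_derivative (- nabla_h ar (h t) x y)) (at t within {0..1}))) \<and>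
      (\<forall>x y. ar x y \<longrightarrow> (\<forall>t\<in>{0..1}. g t x y > 0)) \<and>
      (\<forall>x0 x1 x2. ar x0 x1 \<longrightarrow> ar x1 x2 \<longrightarrow> (\<forall>t\<in>{0..1}.
          f t x1 * h t x0 x1 x2 = g t x0 x1 * g t x1 x2)))"

end

theory Submission
  imports Defs
begin

lemma walk_single[simp]: "walk adj [x]"
  by (simp add: walk_def)

lemma oriented_path_walk: "oriented_path ar = walk ar"
  by (simp add: fun_eq_iff oriented_path_def walk_def)

lemma walk_nonempty: "walk adj p \<Longrightarrow> p \<noteq> []"
  by (simp add: walk_def)

lemma walk_Cons: "p \<noteq> [] \<Longrightarrow> walk adj (x # p) \<longleftrightarrow> adj x (hd p) \<and> walk adj p"
proof -
  assume ne: "p \<noteq> []"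
  have h: "(x # p) ! 1 = hd p" using ne by (cases p) auto
  show ?thesis
  proof
    assume A: "walk adj (x # p)"
    have "adj x (hd p)" using A ne h unfolding walk_def by (metis One_nat_def length_Cons length_greater_0_conv nth_Cons_0 Suc_less_eq)
    moreover have "walk adj p" using A ne unfolding walk_def
      by (metis Suc_less_eq length_Cons nth_Cons_Suc)
    ultimately show "adj x (hd p) \<and> walk adj p" by simp
  next
    assume B: "adj x (hd p) \<and> walk adj p"
    show "walk adj (x # p)" unfolding walk_def
    proof (intro conjI allI impI)
      fix i assume i: "Suc i < length (x # p)"
      show "adj ((x # p) ! i) ((x # p) ! Suc i)"
      proof (cases i)
        case 0 then show ?thesis using B h by simp
      next
        case (Suc j) then show ?thesis using B i unfolding walk_def by simp
      qed
    qed simp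
  qed
qed

lemma walk_append:
  assumes "walk adj p" "walk adj q" "last p = hd q"
  shows "walk adj (p @ tl q)"
  using assms
proof (induction p)
  case Nil then show ?case by (simp add: walk_def)
next
  case (Cons a p)
  show ?case
  proof (cases "p = []")
    case True
    then show ?thesis using Cons.prems by (cases q) auto
  next
    case False
    have wp: "walk adj p" using Cons.prems(1) walk_Cons[OF False] by simp
    have ih: "walk adj (p @ tl q)" using Cons.IH[OF wp Cons.prems(2)] Cons.prems(3) False by simp
    have "adj a (hd p)" using Cons.prems(1) walk_Cons[OF False] by simp
    then show ?thesis using ih False walk_Cons[of "p @ tl q" adj a] by simp
  qed
qed

lemma walk_take: "walk adj p \<Longrightarrow> 0 < n \<Longrightarrow> walk adj (take n p)"
  unfolding walk_def by (simp add: take_eq_Nil)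

lemma walk_drop: "walk adj p \<Longrightarrow> n < length p \<Longrightarrow> walk adj (drop n p)"
  unfolding walk_def by simp

context
  fixes adj :: "'v \<Rightarrow> 'v \<Rightarrow> bool"
  assumes conn: "graph_connected adj"
begin

lemma gdist_ex: "\<exists>p. walk adj p \<and> hd p = x \<and> last p = y \<and> length p = Suc (gdist adj x y)"
proof -
  obtain p where p: "walk adj p" "hd p = x" "last p = y" using conn unfolding graph_connected_def by blast
  then have "p \<noteq> []" by (simp add: walk_def)
  then have "\<exists>n. \<exists>p. walk adj p \<and> hd p = x \<and> last p = y \<and> length p = Suc n"
    using p by (metis Suc_pred length_greater_0_conv)
  then show ?thesis unfolding gdist_def by (rule LeastI_ex)
qed

end

lemma gdist_le: "walk adj p \<Longrightarrow> hd p = x \<Longrightarrow> last p = y \<Longrightarrow> length p = Suc n \<Longrightarrow> gdist adj x y \<le> n"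
  unfolding gdist_def by (rule Least_le) blast

lemma gdist_refl[simp]: "gdist adj x x = 0"
  using gdist_le[of adj "[x]" x x 0] by simp

lemma gdist_adj: "adj x y \<Longrightarrow> gdist adj x y \<le> 1"
  using gdist_le[of adj "[x,y]" x y 1] by (simp add: walk_def nth_Cons split: nat.splits)

lemma gdist_triangle:
  assumes conn: "graph_connected adj"
  shows "gdist adj x z \<le> gdist adj x y + gdist adj y z"
proof -
  obtain p where p: "walk adj p" "hd p = x" "last p = y" "length p = Suc (gdist adj x y)"
    using gdist_ex[OF conn] by blast
  obtain q where q: "walk adj q" "hd q = y" "last q = z" "length q = Suc (gdist adj y z)"
    using gdist_ex[OF conn] by blast
  have w: "walk adj (p @ tl q)" using walk_append p q by metis
  have ne: "p \<noteq> []" "q \<noteq> []" using p q by auto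
  have "hd (p @ tl q) = x" using p ne by simp
  moreover have "last (p @ tl q) = z"
    using q ne p by (cases q) (auto simp: last_append)
  moreover have "length (p @ tl q) = Suc (gdist adj x y + gdist adj y z)" using p q by simp
  ultimately show ?thesis using gdist_le[OF w] by simp
qed


lemma finite_walks:
  assumes lf: "locally_finite adj"
  shows "finite {p. walk adj p \<and> hd p = a \<and> length p = Suc n}"
proof (induction n arbitrary: a)
  case 0
  have "{p. walk adj p \<and> hd p = a \<and> length p = Suc 0} \<subseteq> {[a]}"
    by (auto simp: length_Suc_conv)
  then show ?case using finite_subset by blast
next
  case (Suc n)
  let ?W = "\<lambda>b. {p. walk adj p \<and> hd p = b \<and> length p = Suc n}"
  have "{p. walk adj p \<and> hd p = a \<and> length p = Suc (Suc n)} \<subseteq> (\<lambda>(b,q). a # q) ` (SIGMA b:{b. adj a b}. ?W b)"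
  proof
    fix p assume p: "p \<in> {p. walk adj p \<and> hd p = a \<and> length p = Suc (Suc n)}"
    then obtain q where q: "p = a # q" "length q = Suc n" by (auto simp: length_Suc_conv)
    then have qne: "q \<noteq> []" by auto
    have "adj a (hd q) \<and> walk adj q" using p q walk_Cons[OF qne] by simp
    then show "p \<in> (\<lambda>(b,q). a # q) ` (SIGMA b:{b. adj a b}. ?W b)"
      using q by (auto intro!: image_eqI[where x="(hd q, q)"])
  qed
  moreover have "finite (SIGMA b:{b. adj a b}. ?W b)"
    using lf Suc.IH unfolding locally_finite_def by (intro finite_SigmaI) auto
  ultimately show ?case by (meson finite_imageI finite_subset)
qed

lemma geodesic_split:
  assumes conn: "graph_connected adj" and g: "geodesic adj \<gamma>" and k: "Suc k < length \<gamma>"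
  shows "gdist adj (hd \<gamma>) (last \<gamma>) = gdist adj (hd \<gamma>) (\<gamma>!k) + 1 + gdist adj (\<gamma>!Suc k) (last \<gamma>)"
proof -
  have w: "walk adj \<gamma>" and len: "length \<gamma> = Suc (gdist adj (hd \<gamma>) (last \<gamma>))"
    using g by (auto simp: geodesic_def)
  have ne: "\<gamma> \<noteq> []" using w walk_nonempty by blast
  have a: "gdist adj (hd \<gamma>) (\<gamma>!k) \<le> k"
  proof (rule gdist_le)
    show "walk adj (take (Suc k) \<gamma>)" using walk_take[OF w] by simp
    show "hd (take (Suc k) \<gamma>) = hd \<gamma>" using ne by simp
    show "last (take (Suc k) \<gamma>) = \<gamma>!k" using k by (simp add: take_Suc_conv_app_nth)
    show "length (take (Suc k) \<gamma>) = Suc k" using k by simp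
  qed
  have b: "gdist adj (\<gamma>!Suc k) (last \<gamma>) \<le> length \<gamma> - Suc (Suc k)"
  proof (rule gdist_le)
    show "walk adj (drop (Suc k) \<gamma>)" using walk_drop[OF w k] .
    show "hd (drop (Suc k) \<gamma>) = \<gamma>!Suc k" using k by (simp add: hd_drop_conv_nth)
    show "last (drop (Suc k) \<gamma>) = last \<gamma>" using k by simp
    show "length (drop (Suc k) \<gamma>) = Suc (length \<gamma> - Suc (Suc k))" using k by simp
  qed
  have c: "gdist adj (\<gamma>!k) (\<gamma>!Suc k) \<le> 1"
    using w k unfolding walk_def by (intro gdist_adj) auto
  have t1: "gdist adj (hd \<gamma>) (last \<gamma>) \<le> gdist adj (hd \<gamma>) (\<gamma>!k) + gdist adj (\<gamma>!k) (last \<gamma>)"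
    by (rule gdist_triangle[OF conn])
  have t2: "gdist adj (\<gamma>!k) (last \<gamma>) \<le> gdist adj (\<gamma>!k) (\<gamma>!Suc k) + gdist adj (\<gamma>!Suc k) (last \<gamma>)"
    by (rule gdist_triangle[OF conn])
  show ?thesis using a b c t1 t2 len k by linarith
qed

lemma coupling_alt:
  assumes fin: "finite V" and supp: "\<And>x y. \<pi> x y \<noteq> 0 \<Longrightarrow> x \<in> V \<and> y \<in> V"
  shows "coupling \<mu> \<nu> \<pi> \<longleftrightarrow> (\<forall>x y. 0 \<le> \<pi> x y) \<and> (\<forall>x. (\<Sum>y\<in>V. \<pi> x y) = \<mu> x) \<and> (\<forall>y. (\<Sum>x\<in>V. \<pi> x y) = \<nu> y)"
proof -
  have r: "(\<Sum>y\<in>{y. \<pi> x y \<noteq> 0}. \<pi> x y) = (\<Sum>y\<in>V. \<pi> x y)" for x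
    by (rule sum.mono_neutral_left) (use fin supp in auto)
  have c: "(\<Sum>x\<in>{x. \<pi> x y \<noteq> 0}. \<pi> x y) = (\<Sum>x\<in>V. \<pi> x y)" for y
    by (rule sum.mono_neutral_left) (use fin supp in auto)
  have f: "finite {(x, y). \<pi> x y \<noteq> 0}"
    by (rule finite_subset[of _ "V \<times> V"]) (use fin supp in auto)
  show ?thesis unfolding coupling_def using r c f by auto
qed

lemma tcost_alt:
  assumes fin: "finite V" and supp: "\<And>x y. \<pi> x y \<noteq> 0 \<Longrightarrow> x \<in> V \<and> y \<in> V"
  shows "tcost adj \<pi> = (\<Sum>x\<in>V. \<Sum>y\<in>V. real (gdist adj x y) * \<pi> x y)"
proof -
  have "tcost adj \<pi> = (\<Sum>(x, y)\<in>V \<times> V. real (gdist adj x y) * \<pi> x y)"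
    unfolding tcost_def
    by (rule sum.mono_neutral_left) (use fin supp in auto)
  also have "\<dots> = (\<Sum>x\<in>V. \<Sum>y\<in>V. real (gdist adj x y) * \<pi> x y)"
    by (rule sum.cartesian_product[symmetric])
  finally show ?thesis .
qed

definition supset :: "('v \<Rightarrow> 'v \<Rightarrow> real) \<Rightarrow> 'v set" where
  "supset \<pi> = fst ` {(x, y). \<pi> x y \<noteq> 0} \<union> snd ` {(x, y). \<pi> x y \<noteq> 0}"

lemma supset: 
  assumes "coupling \<mu> \<nu> \<pi>"
  shows "finite (supset \<pi>)" "\<pi> x y \<noteq> 0 \<Longrightarrow> x \<in> supset \<pi> \<and> y \<in> supset \<pi>"
  using assms unfolding coupling_def supset_def by (auto intro: image_eqI[where x="(x,y)"])

lemma coupling_pos: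
  assumes c: "coupling \<mu> \<nu> \<pi>" and p: "\<pi> x y > 0"
  shows "\<mu> x > 0" "\<nu> y > 0"
proof -
  have fin: "finite (supset \<pi>)" and s: "\<And>x y. \<pi> x y \<noteq> 0 \<Longrightarrow> x \<in> supset \<pi> \<and> y \<in> supset \<pi>"
    using supset[OF c] by auto
  have ca: "(\<forall>x y. 0 \<le> \<pi> x y) \<and> (\<forall>x. (\<Sum>y\<in>supset \<pi>. \<pi> x y) = \<mu> x) \<and> (\<forall>y. (\<Sum>x\<in>supset \<pi>. \<pi> x y) = \<nu> y)"
    using coupling_alt[OF fin s] c by simp
  have xy: "x \<in> supset \<pi>" "y \<in> supset \<pi>" using s[of x y] p by auto
  have "\<pi> x y \<le> (\<Sum>y\<in>supset \<pi>. \<pi> x y)"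
    by (rule member_le_sum) (use ca xy fin in auto)
  then show "\<mu> x > 0" using ca p by auto
  have "\<pi> x y \<le> (\<Sum>x\<in>supset \<pi>. \<pi> x y)"
    by (rule member_le_sum) (use ca xy fin in auto)
  then show "\<nu> y > 0" using ca p by auto
qed

lemma sum_shift_mod:
  fixes F :: "nat \<Rightarrow> 'a::comm_monoid_add"
  shows "(\<Sum>i<k. F (Suc i mod k)) = (\<Sum>i<k. F i)"
proof (cases k)
  case 0 then show ?thesis by simp
next
  case (Suc m)
  have "(\<Sum>i<Suc m. F (Suc i mod Suc m)) = (\<Sum>i<m. F (Suc i mod Suc m)) + F (Suc m mod Suc m)"
    by simp
  also have "(\<Sum>i<m. F (Suc i mod Suc m)) = (\<Sum>i<m. F (Suc i))"
    by (rule sum.cong) auto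
  also have "F (Suc m mod Suc m) = F 0" by simp
  also have "(\<Sum>i<m. F (Suc i)) + F 0 = (\<Sum>i<Suc m. F i)"
    by (subst sum.lessThan_Suc_shift) (simp add: add.commute)
  finally show ?thesis using Suc by simp
qed

lemma sum_ind_row:
  assumes "finite V" "b \<in> V"
  shows "(\<Sum>y\<in>V. (if x = a \<and> y = b then 1 else 0 :: real)) = (if x = a then 1 else 0)"
  using assms by (cases "x = a") auto

lemma sum_ind_col:
  assumes "finite V" "a \<in> V"
  shows "(\<Sum>x\<in>V. (if x = a \<and> y = b then 1 else 0 :: real)) = (if y = b then 1 else 0)"
  using assms by (cases "y = b") auto

lemma sum_ind_cost:
  assumes "finite V" "a \<in> V" "b \<in> V"
  shows "(\<Sum>x\<in>V. \<Sum>y\<in>V. c x y * (if x = a \<and> y = b then 1 else 0 :: real)) = c a b"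
proof -
  have "(\<Sum>x\<in>V. \<Sum>y\<in>V. c x y * (if x = a \<and> y = b then 1 else 0 :: real))
      = (\<Sum>x\<in>V. if x = a then c x b else 0)"
  proof (rule sum.cong)
    fix x assume "x \<in> V"
    have e: "\<And>y. c x y * (if x = a \<and> y = b then 1 else 0 :: real) = (if y = b then (if x = a then c x y else 0) else 0)"
      by auto
    show "(\<Sum>y\<in>V. c x y * (if x = a \<and> y = b then 1 else 0 :: real)) = (if x = a then c x b else 0)"
      unfolding e using assms by (simp add: sum.delta)
  qed simp
  also have "\<dots> = c a b" using assms by simp
  finally show ?thesis .
qed

lemma w1_arrow_adj: "w1_arrow adj \<mu> \<nu> x y \<Longrightarrow> adj x y"
  by (simp add: w1_arrow_def)

lemma walk_mono: "walk r p \<Longrightarrow> (\<And>x y. r x y \<Longrightarrow> s x y) \<Longrightarrow> walk s p"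
  unfolding walk_def by auto

lemma arrow_data:
  assumes conn: "graph_connected adj" and ar: "w1_arrow adj \<mu> \<nu> x y"
  shows "\<exists>a b \<pi>. opt_coupling adj \<mu> \<nu> \<pi> \<and> \<pi> a b > 0 \<and> gdist adj a b = gdist adj a x + 1 + gdist adj y b"
proof -
  obtain \<gamma> k where g: "geodesic adj \<gamma>" "(hd \<gamma>, last \<gamma>) \<in> Csupp adj \<mu> \<nu>"
    "Suc k < length \<gamma>" "\<gamma> ! k = x" "\<gamma> ! Suc k = y"
    using ar unfolding w1_arrow_def by blast
  obtain \<pi> where \<pi>: "opt_coupling adj \<mu> \<nu> \<pi>" "\<pi> (hd \<gamma>) (last \<gamma>) > 0"
    using g(2) unfolding Csupp_def by blast
  have "gdist adj (hd \<gamma>) (last \<gamma>) = gdist adj (hd \<gamma>) x + 1 + gdist adj y (last \<gamma>)"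
    using geodesic_split[OF conn g(1) g(3)] g(4,5) by simp
  then show ?thesis using \<pi> by blast
qed

lemma oriented_gdist:
  assumes conn: "graph_connected adj" and op: "oriented_path (w1_arrow adj \<mu> \<nu>) p"
  shows "gdist adj (hd p) (last p) = length p - 1"
proof -
  have wp: "walk (w1_arrow adj \<mu> \<nu>) p" using op by (simp add: oriented_path_walk)
  have ne: "p \<noteq> []" using walk_nonempty[OF wp] .
  define k where "k = length p - 1"
  have len: "length p = Suc k" using ne k_def by simp
  have wa: "walk adj p" using walk_mono[OF wp] w1_arrow_adj by blast
  have le: "gdist adj (hd p) (last p) \<le> k" using gdist_le[OF wa refl refl len] .
  have hdp: "hd p = p ! 0" using ne by (simp add: hd_conv_nth)
  have lastp: "last p = p ! k" using ne len by (simp add: last_conv_nth)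
  have ge: "k \<le> gdist adj (hd p) (last p)"
  proof (cases "k = 0")
    case True then show ?thesis by simp
  next
    case False
    then have kpos: "0 < k" by simp
    have arr: "w1_arrow adj \<mu> \<nu> (p!i) (p!Suc i)" if "i < k" for i
      using wp that len unfolding walk_def by auto
    have ex: "\<forall>i\<in>{..<k}. \<exists>z. opt_coupling adj \<mu> \<nu> (snd (snd z)) \<and> snd (snd z) (fst z) (fst (snd z)) > 0
       \<and> gdist adj (fst z) (fst (snd z)) = gdist adj (fst z) (p!i) + 1 + gdist adj (p!Suc i) (fst (snd z))"
    proof
      fix i assume "i \<in> {..<k}"
      then obtain a b \<pi> where "opt_coupling adj \<mu> \<nu> \<pi> \<and> \<pi> a b > 0 \<and> gdist adj a b = gdist adj a (p!i) + 1 + gdist adj (p!Suc i) b"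
        using arrow_data[OF conn arr[of i]] by auto
      then show "\<exists>z. opt_coupling adj \<mu> \<nu> (snd (snd z)) \<and> snd (snd z) (fst z) (fst (snd z)) > 0
       \<and> gdist adj (fst z) (fst (snd z)) = gdist adj (fst z) (p!i) + 1 + gdist adj (p!Suc i) (fst (snd z))"
        by (intro exI[where x="(a,b,\<pi>)"]) simp
    qed
    obtain Z where Z: "\<forall>i\<in>{..<k}. opt_coupling adj \<mu> \<nu> (snd (snd (Z i))) \<and> snd (snd (Z i)) (fst (Z i)) (fst (snd (Z i))) > 0
       \<and> gdist adj (fst (Z i)) (fst (snd (Z i))) = gdist adj (fst (Z i)) (p!i) + 1 + gdist adj (p!Suc i) (fst (snd (Z i)))"
      using bchoice[OF ex] by blast
    define A where "A i = fst (Z i)" for i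
    define B where "B i = fst (snd (Z i))" for i
    define Pi where "Pi i = snd (snd (Z i))" for i
    have opt: "opt_coupling adj \<mu> \<nu> (Pi i)" and posAB: "Pi i (A i) (B i) > 0"
      and dAB: "gdist adj (A i) (B i) = gdist adj (A i) (p!i) + 1 + gdist adj (p!Suc i) (B i)"
      if "i < k" for i
      using Z that unfolding A_def B_def Pi_def by auto
    have cpl: "coupling \<mu> \<nu> (Pi i)" if "i < k" for i
      using opt[OF that] by (simp add: opt_coupling_def)
    define V where "V = (\<Union>i<k. supset (Pi i))"
    have finV: "finite V" unfolding V_def using supset(1)[OF cpl] by auto
    have suppV: "x \<in> V \<and> y \<in> V" if "i < k" "Pi i x y \<noteq> 0" for i x y
      using supset(2)[OF cpl[OF that(1)] that(2)] that(1) unfolding V_def by auto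
    have ABV: "A i \<in> V" "B i \<in> V" if "i < k" for i
      using suppV[OF that, of "A i" "B i"] posAB[OF that] by auto
    have cPi: "(\<forall>x y. 0 \<le> Pi i x y) \<and> (\<forall>x. (\<Sum>y\<in>V. Pi i x y) = \<mu> x) \<and> (\<forall>y. (\<Sum>x\<in>V. Pi i x y) = \<nu> y)"
      if "i < k" for i
      using coupling_alt[OF finV, of "Pi i" \<mu> \<nu>] suppV[OF that] cpl[OF that] by blast
    define costV where "costV \<phi> = (\<Sum>x\<in>V. \<Sum>y\<in>V. real (gdist adj x y) * \<phi> x y)" for \<phi>
    define c where "c = tcost adj (Pi 0)"
    have tcV: "tcost adj \<phi> = costV \<phi>" if "\<And>x y. \<phi> x y \<noteq> 0 \<Longrightarrow> x \<in> V \<and> y \<in> V" for \<phi>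
      unfolding costV_def by (rule tcost_alt[OF finV that])
    have tc: "costV (Pi i) = c" if "i < k" for i
    proof -
      have "tcost adj (Pi i) \<le> tcost adj (Pi 0)" using opt[OF that] cpl[OF kpos] by (simp add: opt_coupling_def)
      moreover have "tcost adj (Pi 0) \<le> tcost adj (Pi i)" using opt[OF kpos] cpl[OF that] by (simp add: opt_coupling_def)
      ultimately show ?thesis unfolding c_def using tcV[of "Pi i"] suppV[OF that] by auto
    qed
    define \<pi> where "\<pi> x y = (\<Sum>i<k. Pi i x y) / real k" for x y
    have \<pi>nn: "0 \<le> \<pi> x y" for x y unfolding \<pi>_def using cPi by (auto intro!: sum_nonneg divide_nonneg_nonneg)
    have \<pi>supp: "x \<in> V \<and> y \<in> V" if "\<pi> x y \<noteq> 0" for x y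
    proof -
      have "(\<Sum>i<k. Pi i x y) \<noteq> 0" using that unfolding \<pi>_def by auto
      then have "\<exists>i\<in>{..<k}. Pi i x y \<noteq> 0" using sum.neutral[of "{..<k}" "\<lambda>i. Pi i x y"] by blast
      then obtain i where "i < k" "Pi i x y \<noteq> 0" by auto
      then show ?thesis using suppV by blast
    qed
    have lin: "costV (\<lambda>x y. \<Sum>i<k. F i x y) = (\<Sum>i<k. costV (F i))" for F
    proof -
      have "costV (\<lambda>x y. \<Sum>i<k. F i x y) = (\<Sum>x\<in>V. \<Sum>i<k. \<Sum>y\<in>V. real (gdist adj x y) * F i x y)"
        unfolding costV_def by (rule sum.cong[OF refl], simp only: sum_distrib_left, rule sum.swap)
      also have "\<dots> = (\<Sum>i<k. costV (F i))" unfolding costV_def by (rule sum.swap)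
      finally show ?thesis .
    qed
    have lin2: "costV (\<lambda>x y. \<phi> x y + r * \<psi> x y) = costV \<phi> + r * costV \<psi>" for \<phi> \<psi> r
      unfolding costV_def by (simp add: sum.distrib sum_distrib_left algebra_simps)
    have lin4: "costV (\<lambda>x y. \<phi> x y - \<psi> x y) = costV \<phi> - costV \<psi>" for \<phi> \<psi>
      unfolding costV_def by (simp add: sum_subtractf right_diff_distrib)
    have lin3: "costV (\<lambda>x y. \<phi> x y / r) = costV \<phi> / r" for \<phi> r
      unfolding costV_def by (simp add: sum_divide_distrib)
    have \<pi>row: "(\<Sum>y\<in>V. \<pi> x y) = \<mu> x" for x
    proof -
      have "(\<Sum>y\<in>V. \<pi> x y) = (\<Sum>y\<in>V. \<Sum>i<k. Pi i x y) / real k"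
        unfolding \<pi>_def by (simp only: sum_divide_distrib)
      also have "\<dots> = (\<Sum>i<k. \<Sum>y\<in>V. Pi i x y) / real k" by (simp only: sum.swap[of _ V])
      also have "\<dots> = (\<Sum>i<k. \<mu> x) / real k" using cPi by simp
      finally show ?thesis using kpos by simp
    qed
    have \<pi>col: "(\<Sum>x\<in>V. \<pi> x y) = \<nu> y" for y
    proof -
      have "(\<Sum>x\<in>V. \<pi> x y) = (\<Sum>x\<in>V. \<Sum>i<k. Pi i x y) / real k"
        unfolding \<pi>_def by (simp only: sum_divide_distrib)
      also have "\<dots> = (\<Sum>i<k. \<Sum>x\<in>V. Pi i x y) / real k" by (simp only: sum.swap[of _ V])
      also have "\<dots> = (\<Sum>i<k. \<nu> y) / real k" using cPi by simp
      finally show ?thesis using kpos by simp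
    qed
    have \<pi>cost: "costV \<pi> = c"
    proof -
      have "costV \<pi> = (\<Sum>i<k. costV (Pi i)) / real k"
        unfolding \<pi>_def lin3 lin ..
      also have "\<dots> = (\<Sum>i<k. c) / real k" using tc by simp
      finally show ?thesis using kpos by simp
    qed
    define \<delta> where "\<delta> = Min ((\<lambda>i. Pi i (A i) (B i)) ` {..<k})"
    have \<delta>pos: "0 < \<delta>" unfolding \<delta>_def using kpos posAB by (subst Min_gr_iff) auto
    have \<delta>le: "\<delta> \<le> Pi i (A i) (B i)" if "i < k" for i
      unfolding \<delta>_def using that by (intro Min_le) auto
    have \<pi>AB: "\<delta> / real k \<le> \<pi> (A i) (B i)" if "i < k" for i
    proof -
      have "Pi i (A i) (B i) \<le> (\<Sum>j<k. Pi j (A i) (B i))"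
        by (rule member_le_sum) (use that cPi in auto)
      then show ?thesis unfolding \<pi>_def using \<delta>le[OF that] kpos
        by (simp add: divide_right_mono)
    qed
    define \<epsilon> where "\<epsilon> = \<delta> / (real k * real k)"
    have \<epsilon>pos: "0 < \<epsilon>" unfolding \<epsilon>_def using \<delta>pos kpos by simp
    define e where "e a b x y = (if x = a \<and> y = b then 1 else 0 :: real)" for a b x y :: 'a
    define \<sigma> where "\<sigma> i = Suc i mod k" for i
    have \<sigma>lt: "\<sigma> i < k" for i unfolding \<sigma>_def using kpos by simp
    define D where "D x y = (\<Sum>i<k. e (A (\<sigma> i)) (B i) x y - e (A i) (B i) x y)" for x y
    define \<pi>' where "\<pi>' x y = \<pi> x y + \<epsilon> * D x y" for x y
    have \<pi>'nn: "0 \<le> \<pi>' x y" for x y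
    proof (cases "\<exists>j<k. x = A j \<and> y = B j")
      case True
      then obtain j where j: "j < k" "x = A j" "y = B j" by blast
      have "(\<Sum>i<k. (-1::real)) \<le> D x y" unfolding D_def by (rule sum_mono) (auto simp: e_def)
      then have "- real k \<le> D x y" by simp
      then have "\<epsilon> * (- real k) \<le> \<epsilon> * D x y" using \<epsilon>pos by (intro mult_left_mono) auto
      moreover have "\<epsilon> * real k = \<delta> / real k" unfolding \<epsilon>_def using kpos by (simp add: field_simps)
      moreover have "\<delta> / real k \<le> \<pi> x y" using \<pi>AB[OF j(1)] j by simp
      ultimately show ?thesis unfolding \<pi>'_def by linarith
    next
      case False
      have "0 \<le> D x y" unfolding D_def using False by (intro sum_nonneg) (auto simp: e_def)
      then show ?thesis unfolding \<pi>'_def using \<pi>nn[of x y] \<epsilon>pos by simp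
    qed
    have \<pi>'supp: "x \<in> V \<and> y \<in> V" if "\<pi>' x y \<noteq> 0" for x y
    proof (cases "\<pi> x y = 0")
      case False then show ?thesis using \<pi>supp by blast
    next
      case True
      then have "D x y \<noteq> 0" using that unfolding \<pi>'_def by auto
      then have "\<exists>i\<in>{..<k}. e (A (\<sigma> i)) (B i) x y - e (A i) (B i) x y \<noteq> 0"
        unfolding D_def using sum.neutral[of "{..<k}" "\<lambda>i. e (A (\<sigma> i)) (B i) x y - e (A i) (B i) x y"] by blast
      then obtain i where i: "i < k" "e (A (\<sigma> i)) (B i) x y - e (A i) (B i) x y \<noteq> 0" by auto
      then have "(x = A (\<sigma> i) \<and> y = B i) \<or> (x = A i \<and> y = B i)" unfolding e_def by (auto split: if_splits)
      then show ?thesis using ABV i(1) \<sigma>lt by blast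
    qed
    have Drow: "(\<Sum>y\<in>V. D x y) = 0" for x
    proof -
      have "(\<Sum>y\<in>V. D x y) = (\<Sum>i<k. (\<Sum>y\<in>V. e (A (\<sigma> i)) (B i) x y) - (\<Sum>y\<in>V. e (A i) (B i) x y))"
        unfolding D_def by (simp only: sum.swap[of _ V] sum_subtractf)
      also have "\<dots> = (\<Sum>i<k. (if x = A (\<sigma> i) then 1 else 0) - (if x = A i then 1 else 0))"
        by (rule sum.cong[OF refl]) (simp add: e_def sum_ind_row[OF finV ABV(2)])
      also have "\<dots> = (\<Sum>i<k. (if x = A (\<sigma> i) then 1 else 0)) - (\<Sum>i<k. (if x = A i then 1 else 0::real))"
        by (rule sum_subtractf)
      also have "(\<Sum>i<k. (if x = A (\<sigma> i) then 1 else 0)) = (\<Sum>i<k. (if x = A i then 1 else 0::real))"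
        unfolding \<sigma>_def by (rule sum_shift_mod[where F="\<lambda>j. if x = A j then 1 else 0"])
      finally show ?thesis by simp
    qed
    have Dcol: "(\<Sum>x\<in>V. D x y) = 0" for y
    proof -
      have "(\<Sum>x\<in>V. D x y) = (\<Sum>i<k. (\<Sum>x\<in>V. e (A (\<sigma> i)) (B i) x y) - (\<Sum>x\<in>V. e (A i) (B i) x y))"
        unfolding D_def by (simp only: sum.swap[of _ V] sum_subtractf)
      also have "\<dots> = (\<Sum>i<k. (if y = B i then 1 else 0) - (if y = B i then 1 else 0))"
        by (rule sum.cong[OF refl]) (simp add: e_def sum_ind_col[OF finV ABV(1)] sum_ind_col[OF finV ABV(1)[OF \<sigma>lt]])
      finally show ?thesis by simp
    qed
    have Dcost: "costV D = (\<Sum>i<k. real (gdist adj (A (\<sigma> i)) (B i)) - real (gdist adj (A i) (B i)))"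
    proof -
      have "costV D = (\<Sum>i<k. costV (\<lambda>x y. e (A (\<sigma> i)) (B i) x y - e (A i) (B i) x y))"
        unfolding D_def by (rule lin)
      also have "\<dots> = (\<Sum>i<k. real (gdist adj (A (\<sigma> i)) (B i)) - real (gdist adj (A i) (B i)))"
      proof (rule sum.cong[OF refl])
        fix i assume i: "i \<in> {..<k}"
        have "costV (\<lambda>x y. e (A (\<sigma> i)) (B i) x y - e (A i) (B i) x y)
            = costV (e (A (\<sigma> i)) (B i)) - costV (e (A i) (B i))" by (rule lin4)
        also have "\<dots> = real (gdist adj (A (\<sigma> i)) (B i)) - real (gdist adj (A i) (B i))"
          unfolding costV_def e_def
        proof -
          have iK: "i < k" using i by simp
          show "(\<Sum>x\<in>V. \<Sum>y\<in>V. real (gdist adj x y) * (if x = A (\<sigma> i) \<and> y = B i then 1 else 0)) -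
              (\<Sum>x\<in>V. \<Sum>y\<in>V. real (gdist adj x y) * (if x = A i \<and> y = B i then 1 else 0)) =
              real (gdist adj (A (\<sigma> i)) (B i)) - real (gdist adj (A i) (B i))"
            using sum_ind_cost[OF finV ABV(1)[OF \<sigma>lt[of i]] ABV(2)[OF iK], where c="\<lambda>x y. real (gdist adj x y)"]
                  sum_ind_cost[OF finV ABV(1)[OF iK] ABV(2)[OF iK], where c="\<lambda>x y. real (gdist adj x y)"] by simp
        qed
        finally show "costV (\<lambda>x y. e (A (\<sigma> i)) (B i) x y - e (A i) (B i) x y) = real (gdist adj (A (\<sigma> i)) (B i)) - real (gdist adj (A i) (B i))" .
      qed
      finally show ?thesis .
    qed
    have \<pi>'r: "(\<Sum>y\<in>V. \<pi>' x y) = \<mu> x" for x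
      unfolding \<pi>'_def by (simp add: sum.distrib sum_distrib_left[symmetric] Drow \<pi>row)
    have \<pi>'col: "(\<Sum>x\<in>V. \<pi>' x y) = \<nu> y" for y
      unfolding \<pi>'_def by (simp add: sum.distrib sum_distrib_left[symmetric] Dcol \<pi>col)
    have \<pi>'c: "coupling \<mu> \<nu> \<pi>'"
      using coupling_alt[OF finV \<pi>'supp, where \<mu>=\<mu> and \<nu>=\<nu>] \<pi>'nn \<pi>'r \<pi>'col by simp
    have "c \<le> tcost adj \<pi>'" using opt[OF kpos] \<pi>'c unfolding c_def opt_coupling_def by blast
    also have "tcost adj \<pi>' = costV \<pi>'" by (rule tcV[OF \<pi>'supp])
    also have "costV \<pi>' = c + \<epsilon> * costV D" unfolding \<pi>'_def lin2 \<pi>cost ..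
    finally have "0 \<le> costV D" using \<epsilon>pos by (simp add: zero_le_mult_iff)
    then have realineq: "(\<Sum>i<k. real (gdist adj (A i) (B i))) \<le> (\<Sum>i<k. real (gdist adj (A (\<sigma> i)) (B i)))"
      unfolding Dcost by (simp add: sum_subtractf)
    then have natineq: "(\<Sum>i<k. gdist adj (A i) (B i)) \<le> (\<Sum>i<k. gdist adj (A (\<sigma> i)) (B i))"
      by (simp only: of_nat_sum[symmetric] of_nat_le_iff)
    have tri: "gdist adj (A (\<sigma> i)) (B i) \<le> gdist adj (A (\<sigma> i)) (p ! \<sigma> i) + gdist adj (p ! \<sigma> i) (p ! Suc i) + gdist adj (p ! Suc i) (B i)" for i
      using gdist_triangle[OF conn, where x="A (\<sigma> i)" and y="p ! \<sigma> i" and z="B i"] gdist_triangle[OF conn, where x="p ! \<sigma> i" and y="p ! Suc i" and z="B i"] by linarith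
    obtain m where km: "k = Suc m" using kpos by (cases k) auto
    have mid: "(\<Sum>i<k. gdist adj (p ! \<sigma> i) (p ! Suc i)) = gdist adj (p ! 0) (p ! k)"
    proof -
      have "(\<Sum>i<Suc m. gdist adj (p ! \<sigma> i) (p ! Suc i)) = (\<Sum>i<m. gdist adj (p ! \<sigma> i) (p ! Suc i)) + gdist adj (p ! \<sigma> m) (p ! Suc m)"
        by simp
      also have "(\<Sum>i<m. gdist adj (p ! \<sigma> i) (p ! Suc i)) = 0"
        by (rule sum.neutral) (auto simp: \<sigma>_def km)
      also have "\<sigma> m = 0" by (simp add: \<sigma>_def km)
      finally show ?thesis using km by simp
    qed
    have shiftA: "(\<Sum>i<k. gdist adj (A (\<sigma> i)) (p ! \<sigma> i)) = (\<Sum>i<k. gdist adj (A i) (p ! i))"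
      unfolding \<sigma>_def by (rule sum_shift_mod[where F="\<lambda>j. gdist adj (A j) (p ! j)"])
    have "(\<Sum>i<k. gdist adj (A (\<sigma> i)) (B i)) \<le> (\<Sum>i<k. gdist adj (A (\<sigma> i)) (p ! \<sigma> i) + gdist adj (p ! \<sigma> i) (p ! Suc i) + gdist adj (p ! Suc i) (B i))"
      by (rule sum_mono) (rule tri)
    also have "\<dots> = (\<Sum>i<k. gdist adj (A i) (p ! i)) + gdist adj (p ! 0) (p ! k) + (\<Sum>i<k. gdist adj (p ! Suc i) (B i))"
      by (simp only: sum.distrib shiftA mid)
    finally have up: "(\<Sum>i<k. gdist adj (A (\<sigma> i)) (B i)) \<le> (\<Sum>i<k. gdist adj (A i) (p ! i)) + gdist adj (p ! 0) (p ! k) + (\<Sum>i<k. gdist adj (p ! Suc i) (B i))" .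
    have "(\<Sum>i<k. gdist adj (A i) (B i)) = (\<Sum>i<k. gdist adj (A i) (p ! i) + 1 + gdist adj (p ! Suc i) (B i))"
      by (rule sum.cong[OF refl]) (simp add: dAB)
    also have "\<dots> = (\<Sum>i<k. gdist adj (A i) (p ! i)) + (\<Sum>i<k. 1) + (\<Sum>i<k. gdist adj (p ! Suc i) (B i))"
      by (simp only: sum.distrib)
    also have "(\<Sum>i<k. (1::nat)) = k" by simp
    finally have lo: "(\<Sum>i<k. gdist adj (A i) (B i)) = (\<Sum>i<k. gdist adj (A i) (p ! i)) + k + (\<Sum>i<k. gdist adj (p ! Suc i) (B i))" .
    have "k \<le> gdist adj (p ! 0) (p ! k)" using natineq up lo by linarith
    then show ?thesis using hdp lastp by simp
  qed
  show ?thesis using le ge len by simp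
qed


lemma finite_arrows:
  assumes lf: "locally_finite adj" and pm: "prob_dist \<mu>" and pn: "prob_dist \<nu>"
  shows "finite {(x,y). w1_arrow adj \<mu> \<nu> x y}"
proof -
  have Cs: "Csupp adj \<mu> \<nu> \<subseteq> {x. \<mu> x \<noteq> 0} \<times> {y. \<nu> y \<noteq> 0}"
  proof
    fix z assume "z \<in> Csupp adj \<mu> \<nu>"
    then obtain a b \<pi> where z: "z = (a,b)" "opt_coupling adj \<mu> \<nu> \<pi>" "\<pi> a b > 0"
      unfolding Csupp_def by blast
    then have "coupling \<mu> \<nu> \<pi>" by (simp add: opt_coupling_def)
    from coupling_pos[OF this z(3)] show "z \<in> {x. \<mu> x \<noteq> 0} \<times> {y. \<nu> y \<noteq> 0}" using z by auto
  qed
  have finC: "finite (Csupp adj \<mu> \<nu>)"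
    by (rule finite_subset[OF Cs]) (use pm pn in \<open>auto simp: prob_dist_def\<close>)
  define G where "G a b = {p. walk adj p \<and> hd p = a \<and> length p = Suc (gdist adj a b)}" for a b
  have finG: "finite (G a b)" for a b unfolding G_def by (rule finite_walks[OF lf])
  have "{(x,y). w1_arrow adj \<mu> \<nu> x y} \<subseteq> (\<Union>z\<in>Csupp adj \<mu> \<nu>. \<Union>\<gamma>\<in>G (fst z) (snd z). set \<gamma> \<times> set \<gamma>)"
  proof
    fix z assume "z \<in> {(x,y). w1_arrow adj \<mu> \<nu> x y}"
    then obtain x y where xy: "z = (x,y)" "w1_arrow adj \<mu> \<nu> x y" by blast
    then obtain \<gamma> k where g: "geodesic adj \<gamma>" "(hd \<gamma>, last \<gamma>) \<in> Csupp adj \<mu> \<nu>"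
      "Suc k < length \<gamma>" "\<gamma> ! k = x" "\<gamma> ! Suc k = y"
      unfolding w1_arrow_def by blast
    have "\<gamma> \<in> G (hd \<gamma>) (last \<gamma>)" using g(1) unfolding G_def geodesic_def by simp
    moreover have "x \<in> set \<gamma>" "y \<in> set \<gamma>" using g(3-5) nth_mem[of k \<gamma>] nth_mem[of "Suc k" \<gamma>] by auto
    ultimately show "z \<in> (\<Union>z\<in>Csupp adj \<mu> \<nu>. \<Union>\<gamma>\<in>G (fst z) (snd z). set \<gamma> \<times> set \<gamma>)"
      using g(2) xy by force
  qed
  moreover have "finite (\<Union>z\<in>Csupp adj \<mu> \<nu>. \<Union>\<gamma>\<in>G (fst z) (snd z). set \<gamma> \<times> set \<gamma>)"
    using finC finG by auto
  ultimately show ?thesis by (rule finite_subset)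
qed

lemma Cpath_single[simp]: "Cpath f g [x] = f x"
  by (simp add: Cpath_def)

lemma Cpath_two[simp]: "Cpath f g [x, y] = g x y"
  by (simp add: Cpath_def)

lemma Cpath_frac:
  assumes "length p \<ge> 2"
  shows "Cpath f g p = (\<Prod>i<length p - 1. g (p ! i) (p ! Suc i)) / (\<Prod>j\<in>{1..length p - 2}. f (p ! j))"
proof (cases "length p = 2")
  case True
  then show ?thesis by (simp add: Cpath_def)
next
  case False
  then show ?thesis using assms by (simp add: Cpath_def)
qed

lemma Cpath_cons:
  assumes len: "length p \<ge> 2"
  shows "Cpath f g (x # p) = g x (hd p) * Cpath f g p / f (hd p)"
proof -
  obtain m where m: "length p = Suc (Suc m)" using len by (metis add_2_eq_Suc le_iff_add)
  have ne: "p \<noteq> []" using m by auto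
  have num: "(\<Prod>i<length (x # p) - 1. g ((x # p) ! i) ((x # p) ! Suc i))
      = g x (hd p) * (\<Prod>i<length p - 1. g (p ! i) (p ! Suc i))"
  proof -
    have "(\<Prod>i<length (x # p) - 1. g ((x # p) ! i) ((x # p) ! Suc i)) = (\<Prod>i<Suc (length p - 1). g ((x # p) ! i) ((x # p) ! Suc i))"
      using m by simp
    also have "\<dots> = g ((x # p) ! 0) ((x # p) ! Suc 0) * (\<Prod>i<length p - 1. g ((x # p) ! Suc i) ((x # p) ! Suc (Suc i)))"
      by (rule prod.lessThan_Suc_shift)
    also have "\<dots> = g x (hd p) * (\<Prod>i<length p - 1. g (p ! i) (p ! Suc i))"
      using ne by (simp add: hd_conv_nth)
    finally show ?thesis .
  qed
  have den: "(\<Prod>j\<in>{1..length (x # p) - 2}. f ((x # p) ! j)) = f (hd p) * (\<Prod>j\<in>{1..length p - 2}. f (p ! j))"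
  proof -
    have "(\<Prod>j\<in>{1..length (x # p) - 2}. f ((x # p) ! j)) = (\<Prod>j\<in>{Suc 0..Suc m}. f ((x # p) ! j))"
      using m by simp
    also have "\<dots> = (\<Prod>j\<in>{0..m}. f ((x # p) ! Suc j))" by (rule prod.shift_bounds_cl_Suc_ivl)
    also have "\<dots> = (\<Prod>j\<in>{0..m}. f (p ! j))" by simp
    also have "\<dots> = f (p ! 0) * (\<Prod>j\<in>{Suc 0..m}. f (p ! j))" by (rule prod.atLeast_Suc_atMost) simp
    also have "\<dots> = f (hd p) * (\<Prod>j\<in>{1..length p - 2}. f (p ! j))" using m ne by (simp add: hd_conv_nth)
    finally show ?thesis .
  qed
  have "Cpath f g (x # p) = (\<Prod>i<length (x # p) - 1. g ((x # p) ! i) ((x # p) ! Suc i)) / (\<Prod>j\<in>{1..length (x # p) - 2}. f ((x # p) ! j))"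
    by (rule Cpath_frac) (use len in simp)
  also have "\<dots> = g x (hd p) * ((\<Prod>i<length p - 1. g (p ! i) (p ! Suc i)) / (\<Prod>j\<in>{1..length p - 2}. f (p ! j))) / f (hd p)"
    unfolding num den by simp
  also have "\<dots> = g x (hd p) * Cpath f g p / f (hd p)" using Cpath_frac[OF len] by simp
  finally show ?thesis .
qed

lemma Cpath_glue:
  assumes "length \<alpha> \<ge> 2" "length \<beta> \<ge> 2" "last \<alpha> = hd \<beta>"
  shows "Cpath f g (\<alpha> @ tl \<beta>) = Cpath f g \<alpha> * Cpath f g \<beta> / f (hd \<beta>)"
  using assms
proof (induction \<alpha>)
  case Nil then show ?case by simp
next
  case (Cons a \<alpha>')
  show ?case
  proof (cases "length \<alpha>' = 1")
    case True
    then obtain v where v: "\<alpha>' = [v]" by (metis One_nat_def length_0_conv length_Suc_conv)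
    have vb: "v = hd \<beta>" using Cons.prems v by simp
    have "(a # \<alpha>') @ tl \<beta> = a # \<beta>" using v vb Cons.prems by (cases \<beta>) auto
    then show ?thesis using Cpath_cons[OF Cons.prems(2), of f g a] v vb by simp
  next
    case False
    then have l2: "length \<alpha>' \<ge> 2" using Cons.prems(1) by simp
    have ne: "\<alpha>' \<noteq> []" using l2 by auto
    have ih: "Cpath f g (\<alpha>' @ tl \<beta>) = Cpath f g \<alpha>' * Cpath f g \<beta> / f (hd \<beta>)"
      using Cons.IH[OF l2 Cons.prems(2)] Cons.prems(3) ne by simp
    have l2': "length (\<alpha>' @ tl \<beta>) \<ge> 2" using l2 by simp
    have "Cpath f g ((a # \<alpha>') @ tl \<beta>) = g a (hd \<alpha>') * Cpath f g (\<alpha>' @ tl \<beta>) / f (hd \<alpha>')"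
      using Cpath_cons[OF l2', of f g a] ne by simp
    also have "\<dots> = (g a (hd \<alpha>') * Cpath f g \<alpha>' / f (hd \<alpha>')) * Cpath f g \<beta> / f (hd \<beta>)"
      unfolding ih by (simp add: ac_simps)
    also have "\<dots> = Cpath f g (a # \<alpha>') * Cpath f g \<beta> / f (hd \<beta>)"
      using Cpath_cons[OF l2, of f g a] by simp
    finally show ?thesis .
  qed
qed

locale dag =
  fixes ar :: "'v \<Rightarrow> 'v \<Rightarrow> bool" and dd :: "'v \<Rightarrow> 'v \<Rightarrow> nat"
  assumes finar: "finite {(x,y). ar x y}"
    and grad: "oriented_path ar p \<Longrightarrow> dd (hd p) (last p) = length p - 1"
begin

lemma op_walk: "oriented_path ar p \<longleftrightarrow> walk ar p"
  by (simp add: oriented_path_walk)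

lemma op_single[simp]: "oriented_path ar [x]"
  by (simp add: op_walk)

lemma op_Cons: "p \<noteq> [] \<Longrightarrow> oriented_path ar (x # p) \<longleftrightarrow> ar x (hd p) \<and> oriented_path ar p"
  by (simp add: op_walk walk_Cons)

lemma op_ne: "oriented_path ar p \<Longrightarrow> p \<noteq> []"
  by (simp add: op_walk walk_nonempty)

lemma op_append: "oriented_path ar p \<Longrightarrow> oriented_path ar q \<Longrightarrow> last p = hd q \<Longrightarrow> oriented_path ar (p @ tl q)"
  by (simp add: op_walk walk_append)

lemma op_snoc: "oriented_path ar p \<Longrightarrow> ar (last p) y \<Longrightarrow> oriented_path ar (p @ [y])"
  using op_append[of p "[last p, y]"] by (simp add: op_Cons)

lemma op_take: "oriented_path ar p \<Longrightarrow> 0 < n \<Longrightarrow> oriented_path ar (take n p)"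
  by (simp add: op_walk walk_take)

lemma op_drop: "oriented_path ar p \<Longrightarrow> n < length p \<Longrightarrow> oriented_path ar (drop n p)"
  by (simp add: op_walk walk_drop)

lemma op_nth: "oriented_path ar p \<Longrightarrow> Suc i < length p \<Longrightarrow> ar (p ! i) (p ! Suc i)"
  by (simp add: oriented_path_def)

lemma dd_refl: "dd x x = 0"
  using grad[of "[x]"] by simp

lemma op_distinct:
  assumes op: "oriented_path ar p"
  shows "distinct p"
proof (rule ccontr)
  assume "\<not> distinct p"
  then obtain i j where ij: "i < j" "j < length p" "p ! i = p ! j"
    by (metis distinct_conv_nth linorder_neqE_nat)
  define q where "q = take (Suc (j - i)) (drop i p)"
  have oq: "oriented_path ar q" unfolding q_def using ij by (intro op_take op_drop op) auto
  have lq: "length q = Suc (j - i)" unfolding q_def using ij by simp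
  have hq: "hd q = p ! i" unfolding q_def using ij by (simp add: hd_drop_conv_nth)
  have lastq: "last q = p ! j"
  proof -
    have "q \<noteq> []" using lq by auto
    then have "last q = q ! (j - i)" using lq by (simp add: last_conv_nth)
    also have "\<dots> = p ! j" unfolding q_def using ij by simp
    finally show ?thesis .
  qed
  have "dd (hd q) (last q) = j - i" using grad[OF oq] lq by simp
  then show False using hq lastq ij dd_refl by simp
qed

lemma no_shortcut:
  assumes "ar x y" "oriented_path ar p" "hd p = x" "last p = y"
  shows "length p = 2"
proof -
  have "oriented_path ar [x, y]" using assms(1) by (simp add: op_Cons)
  from grad[OF this] have "dd x y = 1" by simp
  then show ?thesis using grad[OF assms(2)] assms(3,4) op_ne[OF assms(2)]
    by (cases p) auto
qed

definition Vert where "Vert = fst ` {(x,y). ar x y} \<union> snd ` {(x,y). ar x y}"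

lemma finVert: "finite Vert" unfolding Vert_def using finar by simp

lemma ar_Vert: "ar x y \<Longrightarrow> x \<in> Vert \<and> y \<in> Vert"
  unfolding Vert_def by (auto intro: image_eqI[where x="(x,y)"])

lemma fin_pred: "finite {x0. ar x0 x}"
  by (rule finite_subset[of _ Vert]) (use finVert ar_Vert in auto)

lemma fin_succ: "finite {y. ar x y}"
  by (rule finite_subset[of _ Vert]) (use finVert ar_Vert in auto)

definition Lset where "Lset = {p. set p \<subseteq> Vert \<and> length p \<le> card Vert}"

lemma finLset: "finite Lset" unfolding Lset_def by (rule finite_lists_length_le[OF finVert])

lemma op_long_Lset:
  assumes op: "oriented_path ar p" and l: "length p \<ge> 2"
  shows "p \<in> Lset"
proof -
  have "set p \<subseteq> Vert"
  proof
    fix v assume "v \<in> set p"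
    then obtain i where i: "i < length p" "p ! i = v" by (metis in_set_conv_nth)
    show "v \<in> Vert"
    proof (cases "Suc i < length p")
      case True then show ?thesis using ar_Vert[OF op_nth[OF op True]] i by auto
    next
      case False
      then have "Suc (i - 1) < length p" "Suc (i - 1) = i" using l i by auto
      then show ?thesis using ar_Vert[OF op_nth[OF op, of "i - 1"]] i by auto
    qed
  qed
  moreover have "length p \<le> card Vert"
    using distinct_card[OF op_distinct[OF op]] card_mono[OF finVert \<open>set p \<subseteq> Vert\<close>] by simp
  ultimately show ?thesis unfolding Lset_def by simp
qed

lemma op_short: "oriented_path ar p \<Longrightarrow> \<not> length p \<ge> 2 \<Longrightarrow> p = [hd p]"
  using op_ne[of p] by (cases p) (auto simp: Suc_le_eq)

lemma finite_op_with:
  assumes "\<And>p. oriented_path ar p \<Longrightarrow> P p \<Longrightarrow> \<not> length p \<ge> 2 \<Longrightarrow> p = [z]"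
  shows "finite {p. oriented_path ar p \<and> P p}"
proof (rule finite_subset[of _ "insert [z] Lset"])
  show "{p. oriented_path ar p \<and> P p} \<subseteq> insert [z] Lset"
    using assms op_long_Lset by blast
qed (simp add: finLset)

end

locale geo = dag ar dd for ar :: "'v \<Rightarrow> 'v \<Rightarrow> bool" and dd +
  fixes f :: "real \<Rightarrow> 'v \<Rightarrow> real" and g :: "real \<Rightarrow> 'v \<Rightarrow> 'v \<Rightarrow> real"
    and h :: "real \<Rightarrow> 'v \<Rightarrow> 'v \<Rightarrow> 'v \<Rightarrow> real"
  assumes deriv_f: "t \<in> {0..1} \<Longrightarrow> ((\<lambda>s. f s x) has_real_derivative - nabla_g ar (g t) x) (at t within {0..1})"
    and deriv_g: "ar x y \<Longrightarrow> t \<in> {0..1} \<Longrightarrow> ((\<lambda>s. g s x y) has_real_derivative - nabla_h ar (h t) x y) (at t within {0..1})"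
    and gpos: "ar x y \<Longrightarrow> t \<in> {0..1} \<Longrightarrow> 0 < g t x y"
    and fnn: "t \<in> {0..1} \<Longrightarrow> 0 \<le> f t x"
    and hrel: "ar x0 x1 \<Longrightarrow> ar x1 x2 \<Longrightarrow> t \<in> {0..1} \<Longrightarrow> f t x1 * h t x0 x1 x2 = g t x0 x1 * g t x1 x2"
begin

abbreviation C where "C t p \<equiv> Cpath (f t) (g t) p"

definition Dv where
  "Dv t p = (\<Sum>x0\<in>{x0. ar x0 (hd p)}. C t (x0 # p)) - (\<Sum>x3\<in>{x3. ar (last p) x3}. C t (p @ [x3]))"

lemma fpos: "ar x0 x1 \<Longrightarrow> ar x1 x2 \<Longrightarrow> t \<in> {0..1} \<Longrightarrow> 0 < f t x1"
  using hrel[of x0 x1 x2 t] gpos[of x0 x1 t] gpos[of x1 x2 t] fnn[of t x1]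
  by (metis less_eq_real_def mult_eq_0_iff mult_pos_pos)

lemma h_eq: "ar x0 x1 \<Longrightarrow> ar x1 x2 \<Longrightarrow> t \<in> {0..1} \<Longrightarrow> h t x0 x1 x2 = g t x0 x1 * g t x1 x2 / f t x1"
  using hrel[of x0 x1 x2 t] fpos[of x0 x1 x2 t] by (simp add: field_simps)

lemma deriv_C:
  assumes "oriented_path ar p" "t \<in> {0..1}"
  shows "((\<lambda>s. C s p) has_real_derivative Dv t p) (at t within {0..1})"
  using assms(1)
proof (induction p)
  case Nil then show ?case using op_ne by blast
next
  case (Cons x p)
  note tI = assms(2)
  show ?case
  proof (cases "p = []")
    case True
    have "Dv t [x] = - nabla_g ar (g t) x"
      unfolding Dv_def nabla_g_def by simp
    then show ?thesis using deriv_f[OF tI, of x] True by simp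
  next
    case False
    note pne = False
    have axy: "ar x (hd p)" and opp: "oriented_path ar p" using Cons.prems op_Cons[OF pne] by auto
    show ?thesis
    proof (cases "tl p = []")
      case True
      then obtain y where py: "p = [y]" using pne by (cases p) auto
      have axy': "ar x y" using axy py by simp
      have e1: "(\<Sum>x0\<in>{x0. ar x0 x}. C t [x0, x, y]) = (\<Sum>x0\<in>{x0. ar x0 x}. h t x0 x y)"
        by (rule sum.cong[OF refl]) (use h_eq[OF _ axy' tI] Cpath_cons[of "[x,y]"] in simp)
      have e2: "(\<Sum>x3\<in>{x3. ar y x3}. C t [x, y, x3]) = (\<Sum>x3\<in>{x3. ar y x3}. h t x y x3)"
        by (rule sum.cong[OF refl]) (use h_eq[OF axy' _ tI] Cpath_cons[of "[y,x3]" for x3] in simp)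
      have "Dv t [x, y] = - nabla_h ar (h t) x y"
        unfolding Dv_def nabla_h_def using e1 e2 by simp
      then show ?thesis using deriv_g[OF axy' tI] py by simp
    next
      case False
      then have l2: "length p \<ge> 2" using pne by (cases p) (auto simp: Suc_le_eq)
      define y where "y = hd p"
      obtain z where ayz: "ar y z" using op_nth[OF opp, of 0] l2 pne unfolding y_def by (metis hd_conv_nth less_le_trans numeral_2_eq_2 lessI Suc_le_lessD)
      have axy': "ar x y" using axy y_def by simp
      have Fpos: "0 < f t y" using fpos[OF axy' ayz tI] .
      have ih: "((\<lambda>s. C s p) has_real_derivative Dv t p) (at t within {0..1})" using Cons.IH[OF opp] .
      have feq: "(\<lambda>s. C s (x # p)) = (\<lambda>s. g s x y * C s p / f s y)"
        using Cpath_cons[OF l2] y_def by simp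
      have d: "((\<lambda>s. g s x y * C s p / f s y) has_real_derivative
          (((- nabla_h ar (h t) x y) * C t p + Dv t p * g t x y) * f t y - g t x y * C t p * (- nabla_g ar (g t) y)) / (f t y * f t y))
          (at t within {0..1})"
        by (rule DERIV_divide[OF DERIV_mult[OF deriv_g[OF axy' tI] ih] deriv_f[OF tI]]) (use Fpos in simp)
      define G where "G = g t x y"
      define Cp where "Cp = C t p"
      define F where "F = f t y"
      define SXh where "SXh = (\<Sum>x0\<in>{x0. ar x0 x}. h t x0 x y)"
      define SZ where "SZ = (\<Sum>z\<in>{z. ar y z}. g t y z)"
      define SW where "SW = (\<Sum>w\<in>{w. ar w y}. g t w y)"
      define Out where "Out = (\<Sum>x3\<in>{x3. ar (last p) x3}. C t (p @ [x3]))"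
      have hp: "hd p = y" using y_def by simp
      have lastp: "last (x # p) = last p" using pne by simp
      have SZh: "(\<Sum>z\<in>{z. ar y z}. h t x y z) = G * SZ / F"
        unfolding SZ_def G_def F_def sum_divide_distrib sum_distrib_left
        by (rule sum.cong[OF refl]) (use h_eq[OF axy' _ tI] in simp)
      have SWC: "(\<Sum>w\<in>{w. ar w y}. C t (w # p)) = SW * Cp / F"
        unfolding SW_def Cp_def F_def sum_divide_distrib sum_distrib_right
        by (rule sum.cong[OF refl]) (use Cpath_cons[OF l2] hp in simp)
      have SXC: "(\<Sum>x0\<in>{x0. ar x0 x}. C t (x0 # x # p)) = SXh * Cp / F"
        unfolding SXh_def Cp_def F_def sum_divide_distrib sum_distrib_right
      proof (rule sum.cong[OF refl])
        fix x0 assume "x0 \<in> {x0. ar x0 x}"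
        then have ax0: "ar x0 x" by simp
        have l3: "length (x # p) \<ge> 2" using l2 by simp
        show "C t (x0 # x # p) = h t x0 x y * C t p / f t y"
          using Cpath_cons[OF l3, of "f t" "g t" x0] Cpath_cons[OF l2, of "f t" "g t" x] hp h_eq[OF ax0 axy' tI]
          by (simp add: ac_simps)
      qed
      have OutX: "(\<Sum>x3\<in>{x3. ar (last p) x3}. C t ((x # p) @ [x3])) = G * Out / F"
        unfolding Out_def G_def F_def sum_divide_distrib sum_distrib_left
      proof (rule sum.cong[OF refl])
        fix x3
        have l3: "length (p @ [x3]) \<ge> 2" using l2 by simp
        show "C t ((x # p) @ [x3]) = g t x y * C t (p @ [x3]) / f t y"
          using Cpath_cons[OF l3, of "f t" "g t" x] hp pne by simp
      qed
      have Dvp: "Dv t p = SW * Cp / F - Out" unfolding Dv_def Out_def using SWC hp by simp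
      have Dvxp: "Dv t (x # p) = SXh * Cp / F - G * Out / F" unfolding Dv_def using SXC OutX lastp by simp
      have nh: "nabla_h ar (h t) x y = G * SZ / F - SXh" unfolding nabla_h_def SXh_def using SZh by simp
      have ng: "nabla_g ar (g t) y = SZ - SW" unfolding nabla_g_def SZ_def SW_def by simp
      have Fne: "F \<noteq> 0" using Fpos F_def by simp
      have alg: "(((- nabla_h ar (h t) x y) * C t p + Dv t p * g t x y) * f t y - g t x y * C t p * (- nabla_g ar (g t) y)) / (f t y * f t y)
          = Dv t (x # p)"
        unfolding Dvxp Dvp nh ng G_def[symmetric] Cp_def[symmetric] F_def[symmetric]
        using Fne by (simp add: field_simps)
      show ?thesis using d unfolding feq alg .
    qed
  qed
qed

end

lemma vio1: "visits_in_order [z] p \<longleftrightarrow> z \<in> set p"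
proof
  assume "visits_in_order [z] p"
  then obtain ks :: "nat list" where "length ks = 1" "ks ! 0 < length p" "p ! (ks ! 0) = z"
    unfolding visits_in_order_def by auto
  then show "z \<in> set p" by (metis nth_mem)
next
  assume "z \<in> set p"
  then obtain i where "i < length p" "p ! i = z" by (metis in_set_conv_nth)
  then show "visits_in_order [z] p" unfolding visits_in_order_def
    by (intro exI[where x="[i]"]) auto
qed

lemma vio2: "visits_in_order [a, b] p \<longleftrightarrow> (\<exists>i j. i \<le> j \<and> j < length p \<and> p ! i = a \<and> p ! j = b)"
proof
  assume "visits_in_order [a, b] p"
  then obtain ks :: "nat list" where k: "length ks = length [a,b]" "sorted ks"
    "\<forall>i<length [a,b]. ks ! i < length p \<and> p ! (ks ! i) = [a,b] ! i"
    unfolding visits_in_order_def by blast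
  have "length ks = Suc (Suc 0)" using k(1) by simp
  then obtain i j where "ks = [i, j]" by (auto simp: length_Suc_conv)
  then show "\<exists>i j. i \<le> j \<and> j < length p \<and> p ! i = a \<and> p ! j = b"
    using k by (intro exI[where x=i] exI[where x=j]) (auto dest: spec[where x=0] spec[where x=1])
next
  assume "\<exists>i j. i \<le> j \<and> j < length p \<and> p ! i = a \<and> p ! j = b"
  then obtain i j where ij: "i \<le> j" "j < length p" "p ! i = a" "p ! j = b" by blast
  have "\<forall>k<length [a,b]. [i, j] ! k < length p \<and> p ! ([i, j] ! k) = [a, b] ! k"
    using ij by (auto simp: less_Suc_eq)
  then show "visits_in_order [a, b] p" unfolding visits_in_order_def
    using ij by (intro exI[where x="[i,j]"]) auto
qed

lemma glue_inj:
  assumes "distinct (xs @ ys)" "xs @ ys = xs' @ ys'" "xs \<noteq> []" "xs' \<noteq> []" "last xs = last xs'"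
  shows "xs = xs' \<and> ys = ys'"
proof -
  let ?l = "xs @ ys"
  have a: "?l ! (length xs - 1) = last xs" using assms(3) by (simp add: nth_append last_conv_nth)
  have b: "?l ! (length xs' - 1) = last xs'" using assms(2,4) by (simp add: nth_append last_conv_nth)
  have l1: "length xs - 1 < length ?l" using assms(3) by (cases xs) auto
  have l2: "length xs' - 1 < length ?l" unfolding assms(2) using assms(4) by (cases xs') auto
  have "?l ! (length xs - 1) = ?l ! (length xs' - 1)" using a b assms(5) by simp
  then have "length xs - 1 = length xs' - 1" using nth_eq_iff_index_eq[OF assms(1) l1 l2] by simp
  then have "length xs = length xs'" using assms(3,4) by (cases xs; cases xs') auto
  then show ?thesis using assms(2) by simp
qed

context dag begin

lemma op_short2: "oriented_path ar p \<Longrightarrow> \<not> 2 \<le> length p \<Longrightarrow> p = [hd p] \<and> last p = hd p"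
  using op_short[of p] by (cases p) auto

definition P1 where "P1 x = {p. oriented_path ar p \<and> hd p \<in> sources ar \<and> last p = x}"
definition P2 where "P2 x = {p. oriented_path ar p \<and> hd p = x \<and> last p \<in> sinks ar}"
definition EXP where "EXP zs = {p. extremal_path ar p \<and> visits_in_order zs p}"

lemma finP1: "finite (P1 x)"
proof -
  have "finite {p. oriented_path ar p \<and> (hd p \<in> sources ar \<and> last p = x)}"
    by (rule finite_op_with[where z=x]) (use op_short2 in fastforce)
  then show ?thesis unfolding P1_def .
qed

lemma finP2: "finite (P2 x)"
proof -
  have "finite {p. oriented_path ar p \<and> (hd p = x \<and> last p \<in> sinks ar)}"
    by (rule finite_op_with[where z=x]) (use op_short2 in fastforce)
  then show ?thesis unfolding P2_def .
qed

lemma finEXP1: "finite (EXP [x])"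
proof -
  have "finite {p. oriented_path ar p \<and> (visits_in_order [x] p \<and> hd p \<in> sources ar \<and> last p \<in> sinks ar)}"
  proof (rule finite_op_with[where z=x])
    fix p assume "oriented_path ar p" "visits_in_order [x] p \<and> hd p \<in> sources ar \<and> last p \<in> sinks ar" "\<not> 2 \<le> length p"
    then have p1: "p = [hd p]" and xs: "x \<in> set p" using op_short2[of p] unfolding vio1 by auto
    have "x = hd p" using xs by (subst (asm) p1) simp
    then show "p = [x]" using p1 by simp
  qed
  then show ?thesis unfolding EXP_def extremal_path_def by (simp add: conj_ac)
qed

lemma P1_single_source: "x \<in> sources ar \<Longrightarrow> P1 x = {[x]}"
proof -
  assume s: "x \<in> sources ar"
  have "p = [x]" if "p \<in> P1 x" for p
  proof (rule ccontr)
    assume ne: "p \<noteq> [x]"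
    have op: "oriented_path ar p" and l: "last p = x" using that unfolding P1_def by auto
    have "length p \<ge> 2"
    proof (rule ccontr)
      assume "\<not> 2 \<le> length p"
      then have "p = [hd p]" "last p = hd p" using op_short2[OF op] by auto
      then have "p = [x]" using l by simp
      then show False using ne by simp
    qed
    then have "ar (p ! (length p - 2)) (p ! Suc (length p - 2))" by (intro op_nth[OF op]) auto
    moreover have "Suc (length p - 2) = length p - 1" using \<open>length p \<ge> 2\<close> by simp
    ultimately have "ar (p ! (length p - 2)) x" using l op_ne[OF op] by (simp add: last_conv_nth)
    then show False using s unfolding sources_def by auto
  qed
  moreover have "[x] \<in> P1 x" using s unfolding P1_def by simp
  ultimately show ?thesis by blast
qed

lemma P2_single_sink: "x \<in> sinks ar \<Longrightarrow> P2 x = {[x]}"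
proof -
  assume s: "x \<in> sinks ar"
  have "p = [x]" if "p \<in> P2 x" for p
  proof (rule ccontr)
    assume ne: "p \<noteq> [x]"
    have op: "oriented_path ar p" and l: "hd p = x" using that unfolding P2_def by auto
    have "length p \<ge> 2"
    proof (rule ccontr)
      assume "\<not> 2 \<le> length p"
      then have "p = [hd p]" using op_short2[OF op] by auto
      then have "p = [x]" using l by simp
      then show False using ne by simp
    qed
    then have "ar (p ! 0) (p ! Suc 0)" by (intro op_nth[OF op]) auto
    then have "ar x (p ! 1)" using l op_ne[OF op] by (simp add: hd_conv_nth)
    then show False using s unfolding sinks_def by auto
  qed
  moreover have "[x] \<in> P2 x" using s unfolding P2_def by simp
  ultimately show ?thesis by blast
qed

lemma P1_long: "p \<in> P1 x \<Longrightarrow> x \<notin> sources ar \<Longrightarrow> length p \<ge> 2"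
  unfolding P1_def using op_short2[of p] by (cases "2 \<le> length p") force+

lemma P2_long: "p \<in> P2 x \<Longrightarrow> x \<notin> sinks ar \<Longrightarrow> length p \<ge> 2"
  unfolding P2_def using op_short2[of p] by (cases "2 \<le> length p") force+

lemma EXP1_decomp: "EXP [v] = (\<lambda>(\<alpha>, \<beta>). \<alpha> @ tl \<beta>) ` (P1 v \<times> P2 v)"
proof
  show "EXP [v] \<subseteq> (\<lambda>(\<alpha>, \<beta>). \<alpha> @ tl \<beta>) ` (P1 v \<times> P2 v)"
  proof
    fix p assume "p \<in> EXP [v]"
    then have op: "oriented_path ar p" and hs: "hd p \<in> sources ar" and ls: "last p \<in> sinks ar" and vp: "v \<in> set p"
      unfolding EXP_def extremal_path_def vio1 by auto
    obtain k where k: "k < length p" "p ! k = v" using vp by (metis in_set_conv_nth)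
    have ne: "p \<noteq> []" using k by auto
    have a1: "oriented_path ar (take (Suc k) p)" using op_take[OF op] by simp
    have a2: "hd (take (Suc k) p) = hd p" using ne by (cases p) auto
    have a3: "last (take (Suc k) p) = v" using k by (simp add: take_Suc_conv_app_nth)
    have a: "take (Suc k) p \<in> P1 v" unfolding P1_def using a1 a2 a3 hs by simp
    have b: "drop k p \<in> P2 v" unfolding P2_def
      using op_drop[OF op k(1)] ls k by (auto simp: hd_drop_conv_nth)
    have "tl (drop k p) = drop (Suc k) p" by (simp add: drop_Suc tl_drop)
    then have "take (Suc k) p @ tl (drop k p) = p" by simp
    then show "p \<in> (\<lambda>(\<alpha>, \<beta>). \<alpha> @ tl \<beta>) ` (P1 v \<times> P2 v)"
      using a b by (auto intro!: image_eqI[where x="(take (Suc k) p, drop k p)"])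
  qed
next
  show "(\<lambda>(\<alpha>, \<beta>). \<alpha> @ tl \<beta>) ` (P1 v \<times> P2 v) \<subseteq> EXP [v]"
  proof clarify
    fix \<alpha> \<beta> assume a: "\<alpha> \<in> P1 v" and b: "\<beta> \<in> P2 v"
    have oa: "oriented_path ar \<alpha>" and ha: "hd \<alpha> \<in> sources ar" and la: "last \<alpha> = v" using a unfolding P1_def by auto
    have ob: "oriented_path ar \<beta>" and hb: "hd \<beta> = v" and lb: "last \<beta> \<in> sinks ar" using b unfolding P2_def by auto
    have nea: "\<alpha> \<noteq> []" and neb: "\<beta> \<noteq> []" using op_ne oa ob by auto
    have op: "oriented_path ar (\<alpha> @ tl \<beta>)" using op_append[OF oa ob] la hb by simp
    have "hd (\<alpha> @ tl \<beta>) \<in> sources ar" using ha nea by simp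
    moreover have "last (\<alpha> @ tl \<beta>) \<in> sinks ar"
    proof (cases "tl \<beta> = []")
      case True
      then have "\<beta> = [v]" using neb hb by (cases \<beta>) auto
      then show ?thesis using lb la True by simp
    next
      case False
      then show ?thesis using lb neb by (simp add: last_tl)
    qed
    moreover have "v \<in> set (\<alpha> @ tl \<beta>)" using la nea by auto
    ultimately show "\<alpha> @ tl \<beta> \<in> EXP [v]" using op unfolding EXP_def extremal_path_def vio1 by simp
  qed
qed

lemma EXP1_inj: "inj_on (\<lambda>(\<alpha>, \<beta>). \<alpha> @ tl \<beta>) (P1 v \<times> P2 v)"
proof (rule inj_onI, clarify)
  fix \<alpha> \<beta> \<alpha>' \<beta>' assume a: "\<alpha> \<in> P1 v" "\<beta> \<in> P2 v" "\<alpha>' \<in> P1 v" "\<beta>' \<in> P2 v" and eq: "\<alpha> @ tl \<beta> = \<alpha>' @ tl \<beta>'"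
  have "\<alpha> @ tl \<beta> \<in> (\<lambda>(\<alpha>, \<beta>). \<alpha> @ tl \<beta>) ` (P1 v \<times> P2 v)"
    using a(1,2) by (intro image_eqI[where x="(\<alpha>,\<beta>)"]) auto
  then have "\<alpha> @ tl \<beta> \<in> EXP [v]" unfolding EXP1_decomp .
  then have "oriented_path ar (\<alpha> @ tl \<beta>)" unfolding EXP_def extremal_path_def by simp
  then have d: "distinct (\<alpha> @ tl \<beta>)" by (rule op_distinct)
  have ne: "\<alpha> \<noteq> []" "\<alpha>' \<noteq> []" "\<beta> \<noteq> []" "\<beta>' \<noteq> []" using a op_ne unfolding P1_def P2_def by auto
  have "\<alpha> = \<alpha>' \<and> tl \<beta> = tl \<beta>'" by (rule glue_inj[OF d eq ne(1,2)]) (use a in \<open>simp add: P1_def\<close>)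
  moreover have "hd \<beta> = hd \<beta>'" using a unfolding P2_def by simp
  moreover have "\<beta> = hd \<beta> # tl \<beta>" "\<beta>' = hd \<beta>' # tl \<beta>'" using ne(3,4) by auto
  ultimately show "\<alpha> = \<alpha>' \<and> \<beta> = \<beta>'" by (metis (no_types))
qed

lemma EXP2_decomp:
  assumes axy: "ar x0 x"
  shows "EXP [x0, x] = (\<lambda>(\<alpha>, \<gamma>). \<alpha> @ \<gamma>) ` (P1 x0 \<times> P2 x)"
proof
  show "EXP [x0, x] \<subseteq> (\<lambda>(\<alpha>, \<gamma>). \<alpha> @ \<gamma>) ` (P1 x0 \<times> P2 x)"
  proof
    fix p assume "p \<in> EXP [x0, x]"
    then have op: "oriented_path ar p" and hs: "hd p \<in> sources ar" and ls: "last p \<in> sinks ar"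
      and "\<exists>i j. i \<le> j \<and> j < length p \<and> p ! i = x0 \<and> p ! j = x"
      unfolding EXP_def extremal_path_def vio2 by auto
    then obtain i j where ij: "i \<le> j" "j < length p" "p ! i = x0" "p ! j = x" by blast
    define q where "q = take (Suc (j - i)) (drop i p)"
    have oq: "oriented_path ar q" unfolding q_def using ij by (intro op_take op_drop op) auto
    have lq: "length q = Suc (j - i)" unfolding q_def using ij by simp
    have hq: "hd q = x0" unfolding q_def using ij by (simp add: hd_drop_conv_nth)
    have lastq: "last q = x"
    proof -
      have "q \<noteq> []" using lq by auto
      then have "last q = q ! (j - i)" using lq by (simp add: last_conv_nth)
      also have "\<dots> = p ! j" unfolding q_def using ij by simp
      finally show ?thesis using ij by simp
    qed
    have "length q = 2" by (rule no_shortcut[OF axy oq hq lastq])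
    then have j: "j = Suc i" using lq ij by simp
    have ne: "p \<noteq> []" using ij by auto
    have a1: "oriented_path ar (take (Suc i) p)" using op_take[OF op] by simp
    have a2: "hd (take (Suc i) p) = hd p" using ne by (cases p) auto
    have a3: "last (take (Suc i) p) = x0" using ij by (simp add: take_Suc_conv_app_nth)
    have a: "take (Suc i) p \<in> P1 x0" unfolding P1_def using a1 a2 a3 hs by simp
    have b: "drop (Suc i) p \<in> P2 x" unfolding P2_def
      using op_drop[OF op] ls ij j by (auto simp: hd_drop_conv_nth)
    have "take (Suc i) p @ drop (Suc i) p = p" by simp
    then show "p \<in> (\<lambda>(\<alpha>, \<gamma>). \<alpha> @ \<gamma>) ` (P1 x0 \<times> P2 x)"
      using a b by (auto intro!: image_eqI[where x="(take (Suc i) p, drop (Suc i) p)"])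
  qed
next
  show "(\<lambda>(\<alpha>, \<gamma>). \<alpha> @ \<gamma>) ` (P1 x0 \<times> P2 x) \<subseteq> EXP [x0, x]"
  proof clarify
    fix \<alpha> \<gamma> assume a: "\<alpha> \<in> P1 x0" and b: "\<gamma> \<in> P2 x"
    have oa: "oriented_path ar \<alpha>" and ha: "hd \<alpha> \<in> sources ar" and la: "last \<alpha> = x0" using a unfolding P1_def by auto
    have ob: "oriented_path ar \<gamma>" and hb: "hd \<gamma> = x" and lb: "last \<gamma> \<in> sinks ar" using b unfolding P2_def by auto
    have nea: "\<alpha> \<noteq> []" and neb: "\<gamma> \<noteq> []" using op_ne oa ob by auto
    have ob': "oriented_path ar (x0 # \<gamma>)" using op_Cons[OF neb] ob axy hb by simp
    have op: "oriented_path ar (\<alpha> @ \<gamma>)" using op_append[OF oa ob'] la by simp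
    have "hd (\<alpha> @ \<gamma>) \<in> sources ar" using ha nea by simp
    moreover have "last (\<alpha> @ \<gamma>) \<in> sinks ar" using lb neb by simp
    moreover have "visits_in_order [x0, x] (\<alpha> @ \<gamma>)" unfolding vio2
      using nea neb la hb
      by (intro exI[where x="length \<alpha> - 1"] exI[where x="length \<alpha>"])
         (auto simp: nth_append last_conv_nth hd_conv_nth)
    ultimately show "\<alpha> @ \<gamma> \<in> EXP [x0, x]" using op unfolding EXP_def extremal_path_def by simp
  qed
qed

lemma EXP2_inj: "ar x0 x \<Longrightarrow> inj_on (\<lambda>(\<alpha>, \<gamma>). \<alpha> @ \<gamma>) (P1 x0 \<times> P2 x)"
proof (rule inj_onI, clarify)
  fix \<alpha> \<gamma> \<alpha>' \<gamma>' assume axy: "ar x0 x" and a: "\<alpha> \<in> P1 x0" "\<gamma> \<in> P2 x" "\<alpha>' \<in> P1 x0" "\<gamma>' \<in> P2 x" and eq: "\<alpha> @ \<gamma> = \<alpha>' @ \<gamma>'"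
  have "\<alpha> @ \<gamma> \<in> (\<lambda>(\<alpha>, \<gamma>). \<alpha> @ \<gamma>) ` (P1 x0 \<times> P2 x)"
    using a(1,2) by (intro image_eqI[where x="(\<alpha>,\<gamma>)"]) auto
  then have "\<alpha> @ \<gamma> \<in> EXP [x0, x]" unfolding EXP2_decomp[OF axy] .
  then have "oriented_path ar (\<alpha> @ \<gamma>)" unfolding EXP_def extremal_path_def by simp
  then have d: "distinct (\<alpha> @ \<gamma>)" by (rule op_distinct)
  have ne: "\<alpha> \<noteq> []" "\<alpha>' \<noteq> []" using a op_ne unfolding P1_def by auto
  show "\<alpha> = \<alpha>' \<and> \<gamma> = \<gamma>'" by (rule glue_inj[OF d eq ne]) (use a in \<open>simp add: P1_def\<close>)
qed

end

context geo begin

lemma C_pos: "oriented_path ar p \<Longrightarrow> length p \<ge> 2 \<Longrightarrow> t \<in> {0..1} \<Longrightarrow> 0 < C t p"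
proof (induction p)
  case Nil then show ?case by simp
next
  case (Cons x p)
  have pne: "p \<noteq> []" using Cons.prems(2) by auto
  have axp: "ar x (hd p)" and opp: "oriented_path ar p" using Cons.prems(1) op_Cons[OF pne] by auto
  show ?case
  proof (cases "length p \<ge> 2")
    case False
    then obtain y where "p = [y]" using pne by (cases p) (auto simp: Suc_le_eq)
    then show ?thesis using gpos[OF _ Cons.prems(3)] axp by simp
  next
    case True
    have "ar (p ! 0) (p ! Suc 0)" using op_nth[OF opp, of 0] True by simp
    then have "ar (hd p) (p ! 1)" using pne by (simp add: hd_conv_nth)
    then have fp: "0 < f t (hd p)" using fpos[OF axp _ Cons.prems(3)] by blast
    have "0 < C t p" using Cons.IH[OF opp True Cons.prems(3)] .
    then show ?thesis using Cpath_cons[OF True, of "f t" "g t" x] gpos[OF axp Cons.prems(3)] fp by simp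
  qed
qed

lemma C_nn: "oriented_path ar p \<Longrightarrow> t \<in> {0..1} \<Longrightarrow> 0 \<le> C t p"
  using C_pos[of p t] op_short2[of p] fnn[of t "hd p"] by (cases "2 \<le> length p") (auto, metis Cpath_single)

lemma C_const:
  assumes ex: "extremal_path ar p" and t: "t \<in> {0..1}"
  shows "C t p = C 0 p"
proof -
  have op: "oriented_path ar p" and hs: "hd p \<in> sources ar" and ls: "last p \<in> sinks ar"
    using ex unfolding extremal_path_def by auto
  have "Dv s p = 0" for s
  proof -
    have e1: "{x0. ar x0 (hd p)} = {}" and e2: "{x3. ar (last p) x3} = {}" using hs ls unfolding sources_def sinks_def by auto
    show ?thesis unfolding Dv_def e1 e2 by simp
  qed
  then have "\<And>s. s \<in> {0..1} \<Longrightarrow> ((\<lambda>s. C s p) has_real_derivative 0) (at s within {0..1})"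
    using deriv_C[OF op] by metis
  then obtain c where "\<forall>s\<in>{0..1::real}. C s p = c"
    using has_field_derivative_zero_constant[of "{0..1::real}" "\<lambda>s. C s p"] by auto
  then show ?thesis using t by auto
qed

lemma mfun_t:
  assumes t: "t \<in> {0..1}"
  shows "mfun ar (f 0) (g 0) zs = (\<Sum>p\<in>EXP zs. C t p)"
  unfolding mfun_def EXP_def
  by (rule sum.cong[OF refl]) (use C_const[OF _ t] in simp)

lemma exists_P2: "\<exists>\<beta>. \<beta> \<in> P2 v"
proof -
  let ?Q = "{p. oriented_path ar p \<and> hd p = v}"
  have finQ: "finite ?Q"
    by (rule finite_op_with[where z=v]) (use op_short2 in fastforce)
  have vQ: "[v] \<in> ?Q" by simp
  obtain p where pQ: "p \<in> ?Q" and pmax: "\<And>q. q \<in> ?Q \<Longrightarrow> length q \<le> length p"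
  proof -
    have "?Q \<noteq> {}" using vQ by blast
    then have "finite (length ` ?Q)" "length ` ?Q \<noteq> {}" using finQ by auto
    then have "Max (length ` ?Q) \<in> length ` ?Q" by (rule Max_in)
    then obtain p where "p \<in> ?Q" "length p = Max (length ` ?Q)" by auto
    moreover have "\<And>q. q \<in> ?Q \<Longrightarrow> length q \<le> Max (length ` ?Q)" using finQ by simp
    ultimately show ?thesis using that by metis
  qed
  have op: "oriented_path ar p" and hp: "hd p = v" using pQ by auto
  have "last p \<in> sinks ar"
  proof (rule ccontr)
    assume "last p \<notin> sinks ar"
    then obtain y where y: "ar (last p) y" unfolding sinks_def by auto
    have "p @ [y] \<in> ?Q" using op_snoc[OF op y] hp op_ne[OF op] by simp
    then show False using pmax by fastforce
  qed
  then show ?thesis using op hp unfolding P2_def by blast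
qed

lemma exists_P1: "\<exists>\<alpha>. \<alpha> \<in> P1 v"
proof -
  let ?Q = "{p. oriented_path ar p \<and> last p = v}"
  have finQ: "finite ?Q"
    by (rule finite_op_with[where z=v]) (use op_short2 in fastforce)
  have vQ: "[v] \<in> ?Q" by simp
  obtain p where pQ: "p \<in> ?Q" and pmax: "\<And>q. q \<in> ?Q \<Longrightarrow> length q \<le> length p"
  proof -
    have "?Q \<noteq> {}" using vQ by blast
    then have "finite (length ` ?Q)" "length ` ?Q \<noteq> {}" using finQ by auto
    then have "Max (length ` ?Q) \<in> length ` ?Q" by (rule Max_in)
    then obtain p where "p \<in> ?Q" "length p = Max (length ` ?Q)" by auto
    moreover have "\<And>q. q \<in> ?Q \<Longrightarrow> length q \<le> Max (length ` ?Q)" using finQ by simp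
    ultimately show ?thesis using that by metis
  qed
  have op: "oriented_path ar p" and hp: "last p = v" using pQ by auto
  have ne: "p \<noteq> []" using op_ne[OF op] .
  have "hd p \<in> sources ar"
  proof (rule ccontr)
    assume "hd p \<notin> sources ar"
    then obtain y where y: "ar y (hd p)" unfolding sources_def by auto
    have "y # p \<in> ?Q" using op_Cons[OF ne, of y] y op hp ne by simp
    then show False using pmax by fastforce
  qed
  then show ?thesis using op hp unfolding P1_def by blast
qed

definition S where "S t v = (\<Sum>\<beta>\<in>P2 v. C t \<beta>)"
definition A where "A t v = (\<Sum>\<alpha>\<in>P1 v. C t \<alpha>)"
definition Sfac where "Sfac t v = (if v \<in> sources ar then 1 else A t v / f t v)"
definition Tfac where "Tfac t v = (if v \<in> sinks ar then 1 else S t v / f t v)"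

lemma glueL:
  assumes J: "\<And>j. j \<in> J \<Longrightarrow> hd (b j) = v \<and> length (b j) \<ge> 2"
  shows "(\<Sum>\<alpha>\<in>P1 v. \<Sum>j\<in>J. C t (\<alpha> @ tl (b j))) = Sfac t v * (\<Sum>j\<in>J. C t (b j))"
proof (cases "v \<in> sources ar")
  case True
  have "[v] @ tl (b j) = b j" if "j \<in> J" for j
    using J[OF that] by (cases "b j") auto
  then show ?thesis using True unfolding P1_single_source[OF True] Sfac_def by simp
next
  case False
  have "(\<Sum>\<alpha>\<in>P1 v. \<Sum>j\<in>J. C t (\<alpha> @ tl (b j))) = (\<Sum>\<alpha>\<in>P1 v. \<Sum>j\<in>J. C t \<alpha> / f t v * C t (b j))"
  proof (intro sum.cong refl)
    fix \<alpha> j assume a: "\<alpha> \<in> P1 v" and j: "j \<in> J"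
    have la: "length \<alpha> \<ge> 2" using P1_long[OF a False] .
    have lst: "last \<alpha> = hd (b j)" using a J[OF j] unfolding P1_def by simp
    show "C t (\<alpha> @ tl (b j)) = C t \<alpha> / f t v * C t (b j)"
      using Cpath_glue[OF la _ lst, of "f t" "g t"] J[OF j] by simp
  qed
  also have "\<dots> = (\<Sum>\<alpha>\<in>P1 v. C t \<alpha>) / f t v * (\<Sum>j\<in>J. C t (b j))"
    by (simp only: sum_distrib_left[symmetric] sum_distrib_right[symmetric] sum_divide_distrib[symmetric])
  finally show ?thesis using False unfolding Sfac_def A_def by simp
qed

lemma glueR:
  assumes J: "\<And>j. j \<in> J \<Longrightarrow> last (a j) = v \<and> length (a j) \<ge> 2"
  shows "(\<Sum>j\<in>J. \<Sum>\<beta>\<in>P2 v. C t (a j @ tl \<beta>)) = (\<Sum>j\<in>J. C t (a j)) * Tfac t v"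
proof (cases "v \<in> sinks ar")
  case True
  then show ?thesis unfolding P2_single_sink[OF True] Tfac_def by simp
next
  case False
  have "(\<Sum>j\<in>J. \<Sum>\<beta>\<in>P2 v. C t (a j @ tl \<beta>)) = (\<Sum>j\<in>J. \<Sum>\<beta>\<in>P2 v. C t (a j) * (C t \<beta> / f t v))"
  proof (intro sum.cong refl)
    fix \<beta> j assume b: "\<beta> \<in> P2 v" and j: "j \<in> J"
    have lb: "length \<beta> \<ge> 2" using P2_long[OF b False] .
    have lst: "last (a j) = hd \<beta>" using b J[OF j] unfolding P2_def by simp
    have hb: "hd \<beta> = v" using b unfolding P2_def by simp
    show "C t (a j @ tl \<beta>) = C t (a j) * (C t \<beta> / f t v)"
      using Cpath_glue[OF _ lb lst, of "f t" "g t"] J[OF j] hb by simp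
  qed
  also have "\<dots> = (\<Sum>j\<in>J. C t (a j)) * ((\<Sum>\<beta>\<in>P2 v. C t \<beta>) / f t v)"
    by (simp only: sum_distrib_left[symmetric] sum_distrib_right[symmetric] sum_divide_distrib[symmetric])
  finally show ?thesis using False unfolding Tfac_def S_def by simp
qed

lemma m1_sum:
  assumes t: "t \<in> {0..1}"
  shows "mfun ar (f 0) (g 0) [v] = (\<Sum>\<alpha>\<in>P1 v. \<Sum>\<beta>\<in>P2 v. C t (\<alpha> @ tl \<beta>))"
proof -
  have "mfun ar (f 0) (g 0) [v] = (\<Sum>p\<in>EXP [v]. C t p)" by (rule mfun_t[OF t])
  also have "\<dots> = (\<Sum>z\<in>P1 v \<times> P2 v. C t (case z of (\<alpha>, \<beta>) \<Rightarrow> \<alpha> @ tl \<beta>))"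
    unfolding EXP1_decomp by (subst sum.reindex[OF EXP1_inj]) (simp add: comp_def)
  also have "\<dots> = (\<Sum>\<alpha>\<in>P1 v. \<Sum>\<beta>\<in>P2 v. C t (\<alpha> @ tl \<beta>))"
    by (simp add: sum.cartesian_product prod.case_distrib)
  finally show ?thesis .
qed

lemma m2_sum:
  assumes t: "t \<in> {0..1}" and axy: "ar x0 x"
  shows "mfun ar (f 0) (g 0) [x0, x] = (\<Sum>\<alpha>\<in>P1 x0. \<Sum>\<gamma>\<in>P2 x. C t (\<alpha> @ \<gamma>))"
proof -
  have "mfun ar (f 0) (g 0) [x0, x] = (\<Sum>p\<in>EXP [x0, x]. C t p)" by (rule mfun_t[OF t])
  also have "\<dots> = (\<Sum>z\<in>P1 x0 \<times> P2 x. C t (case z of (\<alpha>, \<gamma>) \<Rightarrow> \<alpha> @ \<gamma>))"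
    unfolding EXP2_decomp[OF axy] by (subst sum.reindex[OF EXP2_inj[OF axy]]) (simp add: comp_def)
  also have "\<dots> = (\<Sum>\<alpha>\<in>P1 x0. \<Sum>\<gamma>\<in>P2 x. C t (\<alpha> @ \<gamma>))"
    by (simp add: sum.cartesian_product prod.case_distrib)
  finally show ?thesis .
qed

end

context geo begin

abbreviation M where "M zs \<equiv> mfun ar (f 0) (g 0) zs"

lemma m1L: "t \<in> {0..1} \<Longrightarrow> v \<notin> sinks ar \<Longrightarrow> M [v] = Sfac t v * S t v"
  unfolding m1_sum S_def
  by (rule glueL) (use P2_long in \<open>auto simp: P2_def\<close>)

lemma m1R: "t \<in> {0..1} \<Longrightarrow> v \<notin> sources ar \<Longrightarrow> M [v] = A t v * Tfac t v"
  unfolding m1_sum A_def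
  by (rule glueR[where a="\<lambda>x. x", simplified]) (use P1_long in \<open>auto simp: P1_def\<close>)

lemma m2L:
  assumes t: "t \<in> {0..1}" and axy: "ar x0 x"
  shows "M [x0, x] = Sfac t x0 * (\<Sum>\<gamma>\<in>P2 x. C t (x0 # \<gamma>))"
proof -
  have "M [x0, x] = (\<Sum>\<alpha>\<in>P1 x0. \<Sum>\<gamma>\<in>P2 x. C t (\<alpha> @ tl (x0 # \<gamma>)))"
    unfolding m2_sum[OF t axy] by simp
  also have "\<dots> = Sfac t x0 * (\<Sum>\<gamma>\<in>P2 x. C t (x0 # \<gamma>))"
    by (rule glueL) (use op_ne in \<open>auto simp: P2_def Suc_le_eq\<close>)
  finally show ?thesis .
qed

lemma m2R:
  assumes t: "t \<in> {0..1}" and axy: "ar x x1"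
  shows "M [x, x1] = (\<Sum>\<alpha>\<in>P1 x. C t (\<alpha> @ [x1])) * Tfac t x1"
proof -
  have "M [x, x1] = (\<Sum>\<alpha>\<in>P1 x. \<Sum>\<gamma>\<in>P2 x1. C t ((\<alpha> @ [x1]) @ tl \<gamma>))"
    unfolding m2_sum[OF t axy]
  proof (intro sum.cong refl)
    fix \<alpha> \<gamma> assume "\<gamma> \<in> P2 x1"
    then have "\<gamma> = x1 # tl \<gamma>" using op_ne unfolding P2_def by (cases \<gamma>) auto
    then show "C t (\<alpha> @ \<gamma>) = C t ((\<alpha> @ [x1]) @ tl \<gamma>)" by (metis append.assoc append_Cons append_Nil)
  qed
  also have "\<dots> = (\<Sum>\<alpha>\<in>P1 x. C t (\<alpha> @ [x1])) * Tfac t x1"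
    by (rule glueR) (use op_ne in \<open>auto simp: P1_def Suc_le_eq\<close>)
  finally show ?thesis .
qed

lemma m_pos:
  assumes v: "v \<notin> sources ar \<or> v \<notin> sinks ar"
  shows "0 < M [v]"
proof -
  have t0: "(0::real) \<in> {0..1}" by simp
  obtain \<alpha> \<beta> where a: "\<alpha> \<in> P1 v" and b: "\<beta> \<in> P2 v" using exists_P1 exists_P2 by blast
  define p where "p = \<alpha> @ tl \<beta>"
  have pE: "p \<in> EXP [v]" unfolding EXP1_decomp p_def using a b by (intro image_eqI[where x="(\<alpha>,\<beta>)"]) auto
  have op: "oriented_path ar p" using pE unfolding EXP_def extremal_path_def by simp
  have nea: "\<alpha> \<noteq> []" using a op_ne unfolding P1_def by auto
  have lp: "length p \<ge> 2"
  proof (cases "v \<in> sources ar")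
    case False
    then show ?thesis using P1_long[OF a] unfolding p_def by simp
  next
    case True
    then have "v \<notin> sinks ar" using v by simp
    then have "length \<beta> \<ge> 2" using P2_long[OF b] by simp
    then show ?thesis using nea unfolding p_def by (cases \<alpha>) auto
  qed
  have nn: "\<And>q. q \<in> EXP [v] - {p} \<Longrightarrow> 0 \<le> C 0 q" using C_nn t0 unfolding EXP_def extremal_path_def by auto
  have "0 < C 0 p" using C_pos[OF op lp t0] .
  also have "C 0 p \<le> (\<Sum>q\<in>EXP [v]. C 0 q)"
    by (rule member_le_sum[OF pE nn finEXP1])
  also have "\<dots> = M [v]" using mfun_t[OF t0] by simp
  finally show ?thesis .
qed

lemma thmP:
  assumes t: "t \<in> {0..1}"
  shows "((\<lambda>s. Pfun ar (f 0) (g 0) (f s) (g s) x) has_real_derivative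
           Kop ar (f 0) (g 0) (Pfun ar (f 0) (g 0) (f t) (g t)) x) (at t within {0..1})"
proof -
  have Pf: "Pfun ar (f 0) (g 0) (f s) (g s) y = (1 / M [y]) * S s y" for s y
    unfolding Pfun_def S_def P2_def ..
  have d: "((\<lambda>s. (1 / M [x]) * S s x) has_real_derivative (1 / M [x]) * (\<Sum>\<beta>\<in>P2 x. Dv t \<beta>)) (at t within {0..1})"
    unfolding S_def
    by (intro DERIV_cmult DERIV_sum deriv_C[OF _ t]) (simp add: P2_def)
  define T where "T x0 = (\<Sum>\<gamma>\<in>P2 x. C t (x0 # \<gamma>))" for x0
  have "(\<Sum>\<beta>\<in>P2 x. Dv t \<beta>) = (\<Sum>\<beta>\<in>P2 x. \<Sum>x0\<in>{x0. ar x0 x}. C t (x0 # \<beta>))"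
  proof (rule sum.cong[OF refl])
    fix \<beta> assume b: "\<beta> \<in> P2 x"
    then have e1: "{x3. ar (last \<beta>) x3} = {}" and e2: "hd \<beta> = x" unfolding P2_def sinks_def by auto
    show "Dv t \<beta> = (\<Sum>x0\<in>{x0. ar x0 x}. C t (x0 # \<beta>))" unfolding Dv_def e1 e2 by simp
  qed
  also have "\<dots> = (\<Sum>x0\<in>{x0. ar x0 x}. T x0)" unfolding T_def by (rule sum.swap)
  finally have s1: "(\<Sum>\<beta>\<in>P2 x. Dv t \<beta>) = (\<Sum>x0\<in>{x0. ar x0 x}. T x0)" .
  have K: "Kop ar (f 0) (g 0) (Pfun ar (f 0) (g 0) (f t) (g t)) x = (\<Sum>x0\<in>{x0. ar x0 x}. T x0 / M [x])"
    unfolding Kop_def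
  proof (rule sum.cong[OF refl])
    fix x0 assume "x0 \<in> {x0. ar x0 x}"
    then have ax: "ar x0 x" by simp
    then have ns: "x0 \<notin> sinks ar" unfolding sinks_def by auto
    have m1: "M [x0] = Sfac t x0 * S t x0" using m1L[OF t ns] .
    have m2: "M [x0, x] = Sfac t x0 * T x0" using m2L[OF t ax] unfolding T_def .
    have "M [x0] \<noteq> 0" using m_pos[of x0] ns by simp
    then have "Sfac t x0 \<noteq> 0" "S t x0 \<noteq> 0" using m1 by auto
    then show "M [x0, x] / M [x] * Pfun ar (f 0) (g 0) (f t) (g t) x0 = T x0 / M [x]"
      unfolding Pf m1 m2 by (simp add: field_simps)
  qed
  have "(1 / M [x]) * (\<Sum>\<beta>\<in>P2 x. Dv t \<beta>) = Kop ar (f 0) (g 0) (Pfun ar (f 0) (g 0) (f t) (g t)) x"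
    unfolding s1 K by (simp add: sum_divide_distrib)
  then show ?thesis using d unfolding Pf by simp
qed

lemma thmQ:
  assumes t: "t \<in> {0..1}"
  shows "((\<lambda>s. Qfun ar (f 0) (g 0) (f s) (g s) x) has_real_derivative
           - Kstar ar (f 0) (g 0) (Qfun ar (f 0) (g 0) (f t) (g t)) x) (at t within {0..1})"
proof -
  have Qf: "Qfun ar (f 0) (g 0) (f s) (g s) y = (1 / M [y]) * A s y" for s y
    unfolding Qfun_def A_def P1_def ..
  have d: "((\<lambda>s. (1 / M [x]) * A s x) has_real_derivative (1 / M [x]) * (\<Sum>\<alpha>\<in>P1 x. Dv t \<alpha>)) (at t within {0..1})"
    unfolding A_def
    by (intro DERIV_cmult DERIV_sum deriv_C[OF _ t]) (simp add: P1_def)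
  define U where "U x1 = (\<Sum>\<alpha>\<in>P1 x. C t (\<alpha> @ [x1]))" for x1
  have "(\<Sum>\<alpha>\<in>P1 x. Dv t \<alpha>) = (\<Sum>\<alpha>\<in>P1 x. - (\<Sum>x1\<in>{x1. ar x x1}. C t (\<alpha> @ [x1])))"
  proof (rule sum.cong[OF refl])
    fix \<alpha> assume b: "\<alpha> \<in> P1 x"
    then have e1: "{x0. ar x0 (hd \<alpha>)} = {}" and e2: "last \<alpha> = x" unfolding P1_def sources_def by auto
    show "Dv t \<alpha> = - (\<Sum>x1\<in>{x1. ar x x1}. C t (\<alpha> @ [x1]))" unfolding Dv_def e1 e2 by simp
  qed
  also have "\<dots> = - (\<Sum>x1\<in>{x1. ar x x1}. U x1)" unfolding U_def sum_negf by (subst sum.swap) simp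
  finally have s1: "(\<Sum>\<alpha>\<in>P1 x. Dv t \<alpha>) = - (\<Sum>x1\<in>{x1. ar x x1}. U x1)" .
  have K: "Kstar ar (f 0) (g 0) (Qfun ar (f 0) (g 0) (f t) (g t)) x = (\<Sum>x1\<in>{x1. ar x x1}. U x1 / M [x])"
    unfolding Kstar_def
  proof (rule sum.cong[OF refl])
    fix x1 assume "x1 \<in> {x1. ar x x1}"
    then have ax: "ar x x1" by simp
    then have ns: "x1 \<notin> sources ar" unfolding sources_def by auto
    have m1: "M [x1] = A t x1 * Tfac t x1" using m1R[OF t ns] .
    have m2: "M [x, x1] = U x1 * Tfac t x1" using m2R[OF t ax] unfolding U_def .
    have "M [x1] \<noteq> 0" using m_pos[of x1] ns by simp
    then have "Tfac t x1 \<noteq> 0" "A t x1 \<noteq> 0" using m1 by auto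
    then show "M [x, x1] / M [x] * Qfun ar (f 0) (g 0) (f t) (g t) x1 = U x1 / M [x]"
      unfolding Qf m1 m2 by (simp add: field_simps)
  qed
  have "(1 / M [x]) * (\<Sum>\<alpha>\<in>P1 x. Dv t \<alpha>) = - Kstar ar (f 0) (g 0) (Qfun ar (f 0) (g 0) (f t) (g t)) x"
    unfolding s1 K by (simp add: sum_divide_distrib)
  then show ?thesis using d unfolding Qf by simp
qed

end

theorem proposition3p13:
  fixes adj :: "'v \<Rightarrow> 'v \<Rightarrow> bool"
    and f :: "real \<Rightarrow> 'v \<Rightarrow> real"
    and g :: "real \<Rightarrow> 'v \<Rightarrow> 'v \<Rightarrow> real"
    and h :: "real \<Rightarrow> 'v \<Rightarrow> 'v \<Rightarrow> 'v \<Rightarrow> real"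
  assumes "symp adj"
    and "graph_connected adj"
    and "locally_finite adj"
    and "W1plus_geodesic adj f g h"
  shows "\<forall>x. \<forall>t\<in>{0..1}.
      ((\<lambda>s. Pfun (w1_arrow adj (f 0) (f 1)) (f 0) (g 0) (f s) (g s) x)
         has_real_derivative
         Kop (w1_arrow adj (f 0) (f 1)) (f 0) (g 0)
             (Pfun (w1_arrow adj (f 0) (f 1)) (f 0) (g 0) (f t) (g t)) x) (at t within {0..1})
    \<and> ((\<lambda>s. Qfun (w1_arrow adj (f 0) (f 1)) (f 0) (g 0) (f s) (g s) x)
         has_real_derivative
         - Kstar (w1_arrow adj (f 0) (f 1)) (f 0) (g 0)
             (Qfun (w1_arrow adj (f 0) (f 1)) (f 0) (g 0) (f t) (g t)) x) (at t within {0..1})"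
proof -
  let ?ar = "w1_arrow adj (f 0) (f 1)"
  note W = assms(4)[unfolded W1plus_geodesic_def Let_def]
  have pd: "\<And>t. t \<in> {0..1} \<Longrightarrow> prob_dist (f t)" using W by blast
  have pd0: "prob_dist (f 0)" and pd1: "prob_dist (f 1)" using pd by auto
  interpret dag ?ar "gdist adj"
  proof
    show "finite {(x, y). ?ar x y}" by (rule finite_arrows[OF assms(3) pd0 pd1])
    show "\<And>p. oriented_path ?ar p \<Longrightarrow> gdist adj (hd p) (last p) = length p - 1"
      by (rule oriented_gdist[OF assms(2)])
  qed
  interpret geo ?ar "gdist adj" f g h
  proof
    show "\<And>t x. t \<in> {0..1} \<Longrightarrow> ((\<lambda>s. f s x) has_real_derivative - nabla_g ?ar (g t) x) (at t within {0..1})"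
      using W by blast
    show "\<And>x y t. ?ar x y \<Longrightarrow> t \<in> {0..1} \<Longrightarrow> ((\<lambda>s. g s x y) has_real_derivative - nabla_h ?ar (h t) x y) (at t within {0..1})"
      using W by blast
    show "\<And>x y t. ?ar x y \<Longrightarrow> t \<in> {0..1} \<Longrightarrow> 0 < g t x y"
      using W by blast
    show "\<And>t x. t \<in> {0..1} \<Longrightarrow> 0 \<le> f t x"
      using pd unfolding prob_dist_def by blast
    show "\<And>x0 x1 x2 t. ?ar x0 x1 \<Longrightarrow> ?ar x1 x2 \<Longrightarrow> t \<in> {0..1} \<Longrightarrow> f t x1 * h t x0 x1 x2 = g t x0 x1 * g t x1 x2"
      using W by blast
  qed
  show ?thesis using thmP thmQ by blast
qed

end
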